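(* Let $r>2$, $r_1\ge2$, $r_2\ge0$ with $r=r_1+r_2$. Then there exists $c>0$ such that for all $\kappa_1,\kappa_2>0$ (and for either choice of sign $\pm$): (i) $\displaystyle\int_0^\infty M\big(\kappa_1(s^2\pm1)^2+\kappa_2\big)^{-1/4}L\big(\kappa_1(s^2\pm1)^2+\kappa_2\big)^{-r}\,ds\le c\,\kappa_1^{-1/4}L(\kappa_1)^{-r_1+1}L(\kappa_2)^{-r_2}$; (ii) $\displaystyle\int_0^\infty |s^2\pm1|^{-1/2}L\big(\kappa_1(s^2\pm1)^2\big)^{-r}\,ds\le c\,L(\kappa_1^{-1})L(\kappa_1)^{-r+1}$; (iii) $\displaystyle\int_0^\infty M(\kappa_1s^2+\kappa_2)^{-1/2}L(\kappa_1s^2+\kappa_2)^{-r}\,ds\le c\,\kappa_1^{-1/2}L(\kappa_2)^{-r+2}$; (iv) $\displaystyle\int_0^\infty(\kappa_1s^2+\kappa_2)^{-1/2}L(\kappa_1s^2+\kappa_2)^{-r}\,ds\le c\,\kappa_1^{-1/2}L(\kappa_2^{-1})L(\kappa_2)^{-r+2}$.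
   Context: $M:\mathbb{R}\to[9,\infty)$, $M(x)=\max(9,x)$, and $L=\log\circ M:\mathbb{R}\to[\log9,\infty)$. *)

theory Defs
  imports "HOL-Analysis.Analysis"
begin

definition M :: "real \<Rightarrow> real" where
  "M x = max 9 x"

definition L :: "real \<Rightarrow> real" where
  "L x = ln (M x)"

end

theory Submission
  imports Defs "HOL-Real_Asymp.Real_Asymp"
begin

lemma T2:
  fixes a b q :: real
  assumes b: "b > 0" and a: "a > 0" and ba: "b * a > 1" and q: "q > 1"
  shows "(\<integral>\<^sup>+ s. ennreal (1/(b * s) * ln (b * s) powr (-q)) * indicator {a ..} s \<partial>lborel)
         = ennreal (ln (b * a) powr (1-q) / (b * (q-1)))"
proof -
  define F where "F = (\<lambda>s::real. - (ln (b * s) powr (1-q)) / (b * (q-1)))"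
  have D: "DERIV F x :> 1/(b * x) * ln (b * x) powr (-q)" if "a \<le> x" for x
  proof -
    have x: "x > 0" using that a by linarith
    have bx: "b * x > 1" using ba b that by (smt (verit) mult_left_mono)
    have l: "ln (b * x) > 0" using bx by simp
    have d1: "DERIV (\<lambda>s. ln (b * s)) x :> 1/(b * x) * b"
      using x b by (auto intro!: derivative_eq_intros)
    have d2: "DERIV (\<lambda>s. ln (b * s) powr (1-q)) x :> (1-q) * ln (b * x) powr (1-q - of_nat 1) * (1/(b * x) * b)"
      by (rule DERIV_fun_powr[OF d1 l])
    have "DERIV F x :> - ((1-q) * ln (b * x) powr (1-q-1) * (1/(b * x) * b)) / (b*(q-1))"
      unfolding F_def using DERIV_cdivide[OF DERIV_minus[OF d2], of "b*(q-1)"] by simp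
    moreover have "- ((1-q) * ln (b * x) powr (1-q-1) * (1/(b * x) * b)) / (b*(q-1)) = 1/(b * x) * ln (b * x) powr (-q)"
      using q b x by (simp add: field_simps)
    ultimately show ?thesis by simp
  qed
  have lim: "(F \<longlongrightarrow> 0) at_top" unfolding F_def using q b
    by real_asymp
  have nn: "0 \<le> 1/(b * x) * ln (b * x) powr (-q)" if "a \<le> x" for x
    using that a b by simp
  have "(\<integral>\<^sup>+ s. ennreal (1/(b * s) * ln (b * s) powr (-q)) * indicator {a ..} s \<partial>lborel) = ennreal (0 - F a)"
    by (rule nn_integral_FTC_atLeast[OF _ D nn lim]) measurable
  then show ?thesis by (simp add: F_def)
qed

lemma T3:
  fixes a c :: real
  assumes a: "a > 0" and ac: "a \<le> c"
  shows "(\<integral>\<^sup>+ s. ennreal (1/s) * indicator {a..c} s \<partial>lborel) = ennreal (ln c - ln a)"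
proof -
  have "(\<integral>\<^sup>+ s. ennreal (1/s) * indicator {a..c} s \<partial>lborel) = ennreal (ln c - ln a)"
    by (rule nn_integral_FTC_Icc[where F=ln]) (use a ac in \<open>auto intro!: derivative_eq_intros\<close>)
  then show ?thesis .
qed

lemma Tconst:
  fixes a c C :: real
  assumes "a \<le> c" "C \<ge> 0"
  shows "(\<integral>\<^sup>+ s. ennreal C * indicator {a..c} s \<partial>lborel) = ennreal (C * (c - a))"
  using assms by (simp add: nn_integral_cmult_indicator ennreal_mult)

lemma T1a:
  fixes d :: real
  assumes d: "d \<ge> 0"
  shows "(\<integral>\<^sup>+ x. ennreal (\<bar>x\<bar> powr (-1/2)) * indicator {0..d} x \<partial>lborel) = ennreal (2 * sqrt d)"
proof -
  have h: "((\<lambda>x. x powr (-1/2)) has_integral (d powr (-1/2+1) / (-1/2+1))) {0..d}"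
    by (rule has_integral_powr_from_0) (use d in auto)
  have e: "d powr (-1/2+1) / (-1/2+1) = 2 * sqrt d"
    using d by (simp add: powr_half_sqrt)
  have "(\<integral>\<^sup>+ x. ennreal (x powr (-1/2)) * indicator {0..d} x \<partial>lborel) = ennreal (2 * sqrt d)"
    using nn_integral_has_integral_lebesgue'[OF _ h] e by (simp add: mult.commute)
  moreover have "(\<integral>\<^sup>+ x. ennreal (\<bar>x\<bar> powr (-1/2)) * indicator {0..d} x \<partial>lborel)
     = (\<integral>\<^sup>+ x. ennreal (x powr (-1/2)) * indicator {0..d} x \<partial>lborel)"
    by (intro nn_integral_cong) (auto split: split_indicator)
  ultimately show ?thesis by simp
qed

lemma T1:
  fixes d :: real
  assumes d: "d \<ge> 0"
  shows "(\<integral>\<^sup>+ x. ennreal (\<bar>x - 1\<bar> powr (-1/2)) * indicator {1-d..1+d} x \<partial>lborel) \<le> ennreal (4 * sqrt d)"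
proof -
  let ?g = "\<lambda>x::real. ennreal (\<bar>x - 1\<bar> powr (-1/2))"
  have "(\<integral>\<^sup>+ x. ?g x * indicator {1-d..1+d} x \<partial>lborel)
     \<le> (\<integral>\<^sup>+ x. ?g x * indicator {1..1+d} x + ?g x * indicator {1-d..1} x \<partial>lborel)"
    by (intro nn_integral_mono) (auto split: split_indicator)
  also have "\<dots> = (\<integral>\<^sup>+ x. ?g x * indicator {1..1+d} x \<partial>lborel) + (\<integral>\<^sup>+ x. ?g x * indicator {1-d..1} x \<partial>lborel)"
    by (rule nn_integral_add) measurable
  also have "(\<integral>\<^sup>+ x. ?g x * indicator {1..1+d} x \<partial>lborel) = ennreal 1 * (\<integral>\<^sup>+ x. ?g (1 + 1 * x) * indicator {1..1+d} (1 + 1 * x) \<partial>lborel)"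
    using nn_integral_real_affine[where c=1 and t=1 and f="\<lambda>x. ?g x * indicator {1..1+d} x"] by simp
  also have "\<dots> = (\<integral>\<^sup>+ x. ennreal (\<bar>x\<bar> powr (-1/2)) * indicator {0..d} x \<partial>lborel)"
    by (simp only: ennreal_1 mult_1 mult_1_left, intro nn_integral_cong) (auto split: split_indicator)
  also have "(\<integral>\<^sup>+ x. ?g x * indicator {1-d..1} x \<partial>lborel) = ennreal 1 * (\<integral>\<^sup>+ x. ?g (1 + (-1) * x) * indicator {1-d..1} (1 + (-1) * x) \<partial>lborel)"
    using nn_integral_real_affine[where c="-1" and t=1 and f="\<lambda>x. ?g x * indicator {1-d..1} x"] by simp
  also have "\<dots> = (\<integral>\<^sup>+ x. ennreal (\<bar>x\<bar> powr (-1/2)) * indicator {0..d} x \<partial>lborel)"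
    by (simp only: ennreal_1 mult_1 mult_1_left, intro nn_integral_cong) (auto split: split_indicator)
  finally have "(\<integral>\<^sup>+ x. ?g x * indicator {1-d..1+d} x \<partial>lborel) \<le> ennreal (2 * sqrt d) + ennreal (2 * sqrt d)"
    using T1a[OF d] by simp
  also have "ennreal (2 * sqrt d) + ennreal (2 * sqrt d) = ennreal (4 * sqrt d)"
    using d by (subst ennreal_plus[symmetric]) auto
  finally show ?thesis .
qed

lemma T2n:
  fixes a C k q :: real
  assumes k: "k > 0" and kap: "\<kappa> > 0" and a: "a > 0" and ka: "\<kappa> * a powr k > 1" and q: "q > 1" and C: "C \<ge> 0"
  shows "(\<integral>\<^sup>+ s. ennreal (C * (1/s * ln (\<kappa> * s powr k) powr (-q))) * indicator {a ..} s \<partial>lborel)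
         = ennreal (C * ln (\<kappa> * a powr k) powr (1-q) / (k * (q-1)))"
proof -
  define F where "F = (\<lambda>s::real. - C * (ln (\<kappa> * s powr k) powr (1-q)) / (k * (q-1)))"
  have D: "DERIV F x :> C * (1/x * ln (\<kappa> * x powr k) powr (-q))" if "a \<le> x" for x
  proof -
    have x: "x > 0" using that a by linarith
    have "a powr k \<le> x powr k" using that a k by (intro powr_mono2) auto
    then have bx: "\<kappa> * x powr k > 1" using ka kap by (smt (verit) mult_left_mono)
    have l: "ln (\<kappa> * x powr k) > 0" using bx by simp
    have d0: "DERIV (\<lambda>s. \<kappa> * s powr k) x :> \<kappa> * (k * x powr (k - 1))"
      using x by (auto intro!: derivative_eq_intros)
    have d1': "DERIV (\<lambda>s. ln (\<kappa> * s powr k)) x :> inverse (\<kappa> * x powr k) * (\<kappa> * (k * x powr (k - 1)))"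
      by (rule DERIV_chain2[OF DERIV_ln d0]) (use bx in simp)
    have d1: "DERIV (\<lambda>s. ln (\<kappa> * s powr k)) x :> 1 / (\<kappa> * x powr k) * (\<kappa> * (k * x powr (k - 1)))"
      using d1' by (simp add: divide_inverse)
    have d2: "DERIV (\<lambda>s. ln (\<kappa> * s powr k) powr (1-q)) x :> (1-q) * ln (\<kappa> * x powr k) powr (1-q - of_nat 1) * (1 / (\<kappa> * x powr k) * (\<kappa> * (k * x powr (k - 1))))"
      by (rule DERIV_fun_powr[OF d1 l])
    have "DERIV F x :> - C * ((1-q) * ln (\<kappa> * x powr k) powr (1-q-1) * (1 / (\<kappa> * x powr k) * (\<kappa> * (k * x powr (k - 1))))) / (k*(q-1))"
      unfolding F_def using DERIV_cdivide[OF DERIV_cmult[OF d2, of "-C"], of "k*(q-1)"] by simp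
    moreover have "x powr (k - 1) = x powr k / x" using x by (simp add: powr_diff)
    moreover have "- C * ((1-q) * ln (\<kappa> * x powr k) powr (1-q-1) * (1 / (\<kappa> * x powr k) * (\<kappa> * (k * (x powr k / x))))) / (k*(q-1)) = C * (1/x * ln (\<kappa> * x powr k) powr (-q))"
      using q k x kap by (simp add: field_simps)
    ultimately show ?thesis by simp
  qed
  have lim0: "((\<lambda>s. ln (\<kappa> * s powr k)) \<longlongrightarrow> 0) at_top \<or> True" by simp
  have t1: "filterlim (\<lambda>s. \<kappa> * s powr k) at_top at_top"
    using kap k by real_asymp
  have t2: "filterlim (\<lambda>s. ln (\<kappa> * s powr k)) at_top at_top"
    by (rule filterlim_compose[OF ln_at_top t1])
  have t3: "((\<lambda>s. ln (\<kappa> * s powr k) powr (1-q)) \<longlongrightarrow> 0) at_top"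
    by (rule filterlim_compose[OF _ t2]) (use q in real_asymp)
  have lim: "(F \<longlongrightarrow> 0) at_top" unfolding F_def
    using tendsto_divide[OF tendsto_mult[OF tendsto_const t3, of "-C"] tendsto_const[of "k*(q-1)"]] q k by simp
  have nn: "0 \<le> C * (1/x * ln (\<kappa> * x powr k) powr (-q))" if "a \<le> x" for x
    using that a C by simp
  have "(\<integral>\<^sup>+ s. ennreal (C * (1/s * ln (\<kappa> * s powr k) powr (-q))) * indicator {a ..} s \<partial>lborel) = ennreal (0 - F a)"
    by (rule nn_integral_FTC_atLeast[OF _ D nn lim]) measurable
  then show ?thesis by (simp add: F_def)
qed

lemma Mge: "M x \<ge> 9" "M x \<ge> x" by (auto simp: M_def)
lemma Mmono: "x \<le> y \<Longrightarrow> M x \<le> M y" by (auto simp: M_def)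
lemma ell: "ln (9::real) \<ge> 2"
proof -
  have "exp (2::real) = exp 1 ^ 2" by (simp add: exp_of_nat_mult[symmetric])
  also have "\<dots> \<le> 3 ^ 2" using exp_le by (intro power_mono) auto
  finally have "exp 2 \<le> (9::real)" by simp
  then show ?thesis by (simp add: ln_ge_iff)
qed
lemma Lge1: "L x \<ge> ln 9" by (auto simp: L_def M_def)
lemma Lge: "L x \<ge> ln 9" "L x \<ge> 2" "L x > 0" "L x \<ge> 1"
  using ell Lge1[of x] by auto
lemma Lmono: "x \<le> y \<Longrightarrow> L x \<le> L y" by (auto simp: L_def M_def)
lemma Lbig: "x \<ge> 9 \<Longrightarrow> L x = ln x" by (auto simp: L_def M_def)
lemma Lsmall: "x \<le> 9 \<Longrightarrow> L x = ln 9" by (auto simp: L_def M_def)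

lemma polylog:
  fixes y m :: real
  assumes y: "y \<ge> 1" and m: "m > 0"
  shows "ln y powr m \<le> (8*m) powr m * y powr (1/8)"
proof -
  have yp: "y > 0" using y by simp
  have z: "y powr (1/(8*m)) > 0" using yp by simp
  have "ln (y powr (1/(8*m))) \<le> y powr (1/(8*m))"
    using ln_le_minus_one[OF z] by simp
  then have "ln y / (8*m) \<le> y powr (1/(8*m))" using yp by (simp add: ln_powr)
  then have "ln y \<le> 8*m * y powr (1/(8*m))" using m by (simp add: field_simps)
  then have "ln y powr m \<le> (8*m * y powr (1/(8*m))) powr m"
    using y m by (intro powr_mono2) auto
  also have "\<dots> = (8*m) powr m * y powr (1/8)"
    using m yp by (simp add: powr_mult powr_powr)
  finally show ?thesis .
qed

lemma meas_test: "(\<lambda>s::real. M (\<kappa> * s^4) powr (-1/4) * L (\<kappa> * s^4) powr (-q)) \<in> borel_measurable borel"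
  unfolding M_def L_def by measurable

lemma SPLIT:
  fixes f :: "real \<Rightarrow> real"
  assumes [measurable]: "f \<in> borel_measurable borel"
  shows "(\<integral>\<^sup>+ s. ennreal (f s) * indicator {a ..} s \<partial>lborel)
     \<le> (\<integral>\<^sup>+ s. ennreal (f s) * indicator {a..b} s \<partial>lborel) + (\<integral>\<^sup>+ s. ennreal (f s) * indicator {b ..} s \<partial>lborel)"
proof -
  have "(\<integral>\<^sup>+ s. ennreal (f s) * indicator {a ..} s \<partial>lborel)
     \<le> (\<integral>\<^sup>+ s. ennreal (f s) * indicator {a..b} s + ennreal (f s) * indicator {b ..} s \<partial>lborel)"
    by (intro nn_integral_mono) (auto split: split_indicator)
  also have "\<dots> = (\<integral>\<^sup>+ s. ennreal (f s) * indicator {a..b} s \<partial>lborel) + (\<integral>\<^sup>+ s. ennreal (f s) * indicator {b ..} s \<partial>lborel)"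
    by (rule nn_integral_add) measurable
  finally show ?thesis .
qed

lemma MONO:
  fixes f g :: "real \<Rightarrow> real"
  assumes "\<And>s. s \<in> A \<Longrightarrow> f s \<le> g s"
  shows "(\<integral>\<^sup>+ s. ennreal (f s) * indicator A s \<partial>lborel) \<le> (\<integral>\<^sup>+ s. ennreal (g s) * indicator A s \<partial>lborel)"
  using assms by (intro nn_integral_mono) (auto split: split_indicator intro!: ennreal_leI)

lemma CONSTB:
  fixes f :: "real \<Rightarrow> real"
  assumes "\<And>s. s \<in> {a..b} \<Longrightarrow> f s \<le> C" "a \<le> b" "C \<ge> 0"
  shows "(\<integral>\<^sup>+ s. ennreal (f s) * indicator {a..b} s \<partial>lborel) \<le> ennreal (C * (b - a))"
proof -
  have "(\<integral>\<^sup>+ s. ennreal (f s) * indicator {a..b} s \<partial>lborel) \<le> (\<integral>\<^sup>+ s. ennreal C * indicator {a..b} s \<partial>lborel)"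
    using MONO[of "{a..b}" f "\<lambda>_. C"] assms(1) by simp
  also have "\<dots> = ennreal (C * (b - a))" using Tconst assms by simp
  finally show ?thesis .
qed

lemma ADD:
  fixes X Y :: ennreal
  assumes "X \<le> ennreal a" "Y \<le> ennreal b" "a \<ge> 0" "b \<ge> 0"
  shows "X + Y \<le> ennreal (a + b)"
  using add_mono[OF assms(1,2)] assms(3,4) by (simp add: ennreal_plus[symmetric] del: ennreal_plus)

lemma LE_TRANS:
  fixes X :: ennreal
  assumes "X \<le> ennreal a" "a \<le> b"
  shows "X \<le> ennreal b"
  using assms order_trans ennreal_leI by blast

lemma Apow:
  fixes \<kappa> k :: real
  assumes kap: "\<kappa> > 0" and k: "k > 0"
  defines "A \<equiv> max 1 ((9/\<kappa>) powr (1/k))"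
  shows "A \<ge> 1" "\<kappa> * A powr k = M \<kappa>"
proof -
  show "A \<ge> 1" unfolding A_def by simp
  show "\<kappa> * A powr k = M \<kappa>"
  proof (cases "\<kappa> \<ge> 9")
    case True
    then have "(9/\<kappa>) powr (1/k) \<le> 1" using kap k by (simp add: powr_le1)
    then have "A = 1" unfolding A_def by simp
    then show ?thesis using True by (simp add: M_def)
  next
    case False
    then have "(9/\<kappa>) powr (1/k) \<ge> 1" using kap k by (intro ge_one_powr_ge_zero) auto
    then have "A = (9/\<kappa>) powr (1/k)" unfolding A_def by simp
    then have "A powr k = 9/\<kappa>" using kap k by (simp add: powr_powr)
    then show ?thesis using False kap by (simp add: M_def)
  qed
qed

lemma powr_neg_mono: "0 < x \<Longrightarrow> x \<le> y \<Longrightarrow> e \<ge> 0 \<Longrightarrow> y powr (-e) \<le> x powr (-e)"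
  for x y e :: real by (intro powr_mono2') auto

lemma TAIL_I:
  fixes \<kappa> q :: real
  assumes kap: "\<kappa> > 0" and q: "q > 1"
  shows "(\<integral>\<^sup>+ s. ennreal (M (\<kappa>* s^4) powr (-1/4) * L (\<kappa>* s^4) powr (-q)) * indicator {1 ..} s \<partial>lborel)
      \<le> ennreal ((1 + 1/(4*(q-1))) * \<kappa> powr (-1/4) * L \<kappa> powr (1-q))"
proof -
  define f where "f = (\<lambda>s::real. M (\<kappa>* s^4) powr (-1/4) * L (\<kappa>* s^4) powr (-q))"
  define A where "A = max 1 ((9/\<kappa>) powr (1/4))"
  have A1: "A \<ge> 1" and AM: "\<kappa> * A powr 4 = M \<kappa>"
    using Apow[OF kap, of 4] by (simp_all add: A_def)
  have fm: "f \<in> borel_measurable borel" unfolding f_def M_def L_def by measurable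
  define l where "l = ln (9::real)"
  have l1: "l \<ge> 1" "l \<ge> 2" using ell by (auto simp: l_def)
  have p1: "(\<integral>\<^sup>+ s. ennreal (f s) * indicator {1..A} s \<partial>lborel) \<le> ennreal (\<kappa> powr (-1/4) * L \<kappa> powr (1-q))"
  proof -
    have "(\<integral>\<^sup>+ s. ennreal (f s) * indicator {1..A} s \<partial>lborel) \<le> ennreal (9 powr (-1/4) * l powr (-q) * (A - 1))"
    proof (rule CONSTB[OF _ A1])
      fix s assume "s \<in> {1..A}"
      have "M (\<kappa>* s^4) powr (-1/4) \<le> 9 powr (-1/4)" using powr_neg_mono[of 9 "M (\<kappa>* s^4)" "1/4"] Mge by simp
      moreover have "L (\<kappa>* s^4) powr (-q) \<le> l powr (-q)" using powr_neg_mono[of l "L (\<kappa>* s^4)" q] Lge l1 q unfolding l_def by simp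
      ultimately show "f s \<le> 9 powr (-1/4) * l powr (-q)" unfolding f_def
        by (intro mult_mono) auto
    qed auto
    also have "9 powr (-1/4) * l powr (-q) * (A - 1) \<le> \<kappa> powr (-1/4) * L \<kappa> powr (1-q)"
    proof (cases "\<kappa> \<ge> 9")
      case True
      then have "(9/\<kappa>) powr (1/4) \<le> 1" using kap by (simp add: powr_le1)
      then have "A = 1" unfolding A_def by simp
      then show ?thesis by simp
    next
      case False
      then have LK: "L \<kappa> = l" using Lsmall[of \<kappa>] l_def by simp
      have "A - 1 \<le> (9/\<kappa>) powr (1/4)" unfolding A_def using powr_ge_zero[of "9/\<kappa>" "1/4"] by linarith
      also have "\<dots> = 9 powr (1/4) * \<kappa> powr (-1/4)" using kap by (simp add: powr_divide powr_minus_divide)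
      finally have "9 powr (-1/4) * l powr (-q) * (A - 1) \<le> 9 powr (-1/4) * l powr (-q) * (9 powr (1/4) * \<kappa> powr (-1/4))"
        by (intro mult_left_mono) auto
      also have "\<dots> = (9 powr (-1/4) * 9 powr (1/4)) * (\<kappa> powr (-1/4) * l powr (-q))"
        by (simp only: ac_simps)
      also have "9 powr (-1/4) * 9 powr (1/4) = (1::real)" by (simp add: powr_add[symmetric])
      also have "1 * (\<kappa> powr (-1/4) * l powr (-q)) = \<kappa> powr (-1/4) * l powr (-q)" by simp
      also have "\<dots> \<le> \<kappa> powr (-1/4) * l powr (1-q)"
        using l1 by (intro mult_left_mono powr_mono) auto
      finally show ?thesis using LK by simp
    qed
    finally show ?thesis by (simp add: ennreal_leI)
  qed
  have p2: "(\<integral>\<^sup>+ s. ennreal (f s) * indicator {A ..} s \<partial>lborel) = ennreal (\<kappa> powr (-1/4) * L \<kappa> powr (1-q) / (4*(q-1)))"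
  proof -
    have "(\<integral>\<^sup>+ s. ennreal (f s) * indicator {A ..} s \<partial>lborel)
       = (\<integral>\<^sup>+ s. ennreal (\<kappa> powr (-1/4) * (1/s * ln (\<kappa> * s powr 4) powr (-q))) * indicator {A ..} s \<partial>lborel)"
    proof (intro nn_integral_cong)
      fix s show "ennreal (f s) * indicator {A ..} s = ennreal (\<kappa> powr (-1/4) * (1/s * ln (\<kappa> * s powr 4) powr (-q))) * indicator {A ..} s"
      proof (cases "s \<ge> A")
        case True
        then have s: "s > 0" using A1 by simp
        have s4: "s powr 4 = s^4" using s by (simp add: powr_realpow)
        have "A powr 4 \<le> s powr 4" using True A1 by (intro powr_mono2) auto
        then have big: "\<kappa> * s^4 \<ge> 9" using AM Mge(1)[of \<kappa>] kap s4
          by (smt (verit) mult_left_mono)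
        have "M (\<kappa>* s^4) = \<kappa>* s^4" using big by (simp add: M_def)
        moreover have "L (\<kappa>* s^4) = ln (\<kappa>* s^4)" using big by (simp add: Lbig)
        moreover have "(\<kappa>* s^4) powr (-1/4) = \<kappa> powr (-1/4) * (1/s)"
        proof -
          have "(\<kappa>* s^4) powr (-1/4) = \<kappa> powr (-1/4) * (s powr 4) powr (-1/4)"
            using s kap by (simp add: powr_mult s4)
          also have "(s powr 4) powr (-1/4) = s powr (-1)" by (simp add: powr_powr)
          also have "s powr (-1) = 1/s" using s by (simp add: powr_minus_divide)
          finally show ?thesis .
        qed
        ultimately have "f s = \<kappa> powr (-1/4) * (1/s * ln (\<kappa> * s powr 4) powr (-q))"
          unfolding f_def using s4 by simp
        then show ?thesis by simp
      qed simp
    qed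
    also have "\<dots> = ennreal (\<kappa> powr (-1/4) * ln (\<kappa> * A powr 4) powr (1-q) / (4 * (q-1)))"
    proof (rule T2n[where k=4 and a=A and C="\<kappa> powr (-1/4)"])
      show "\<kappa> * A powr 4 > 1" using AM Mge(1)[of \<kappa>] by linarith
    qed (use kap A1 q in auto)
    finally show ?thesis using AM by (simp add: L_def)
  qed
  have "(\<integral>\<^sup>+ s. ennreal (f s) * indicator {1 ..} s \<partial>lborel)
     \<le> ennreal (\<kappa> powr (-1/4) * L \<kappa> powr (1-q) + \<kappa> powr (-1/4) * L \<kappa> powr (1-q) / (4*(q-1)))"
    by (rule order_trans[OF SPLIT[OF fm, of 1 A] ADD[OF p1 p2[THEN eq_refl]]]) (use q in auto)
  also have "\<kappa> powr (-1/4) * L \<kappa> powr (1-q) + \<kappa> powr (-1/4) * L \<kappa> powr (1-q) / (4*(q-1))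
     = (1 + 1/(4*(q-1))) * \<kappa> powr (-1/4) * L \<kappa> powr (1-q)"
    using q by (simp add: field_simps)
  finally show ?thesis unfolding f_def .
qed

lemma T3C:
  fixes a c C :: real
  assumes a: "a > 0" and ac: "a \<le> c" and C: "C \<ge> 0"
  shows "(\<integral>\<^sup>+ s. ennreal (C * (1/s)) * indicator {a..c} s \<partial>lborel) = ennreal (C * (ln c - ln a))"
proof -
  have "(\<integral>\<^sup>+ s. ennreal (C * (1/s)) * indicator {a..c} s \<partial>lborel) = ennreal (C * ln c - C * ln a)"
    by (rule nn_integral_FTC_Icc[where F="\<lambda>x. C * ln x"]) (use a ac C in \<open>auto intro!: derivative_eq_intros\<close>)
  then show ?thesis by (simp add: algebra_simps)
qed

lemma Linv: "ln (9::real) - ln \<kappa> \<le> 2 * L (1/\<kappa>)" if "\<kappa> > 0" for \<kappa> :: real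
proof -
  have "- ln \<kappa> = ln (1/\<kappa>)" using that by (simp add: ln_div)
  also have "ln (1/\<kappa>) \<le> L (1/\<kappa>)" unfolding L_def M_def using that by simp
  finally show ?thesis using Lge(1)[of "1/\<kappa>"] by simp
qed

lemma TAIL_II:
  fixes \<kappa> q :: real
  assumes kap: "\<kappa> > 0" and q: "q > 1"
  shows "(\<integral>\<^sup>+ s. ennreal (1/s * L (\<kappa> * s^4) powr (-q)) * indicator {1 ..} s \<partial>lborel)
      \<le> ennreal ((1 + 1/(4*(q-1))) * L (1/\<kappa>) * L \<kappa> powr (1-q))"
proof -
  define f where "f = (\<lambda>s::real. 1/s * L (\<kappa> * s^4) powr (-q))"
  define A where "A = max 1 ((9/\<kappa>) powr (1/4))"
  have A1: "A \<ge> 1" and AM: "\<kappa> * A powr 4 = M \<kappa>"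
    using Apow[OF kap, of 4] by (simp_all add: A_def)
  have fm: "f \<in> borel_measurable borel" unfolding f_def M_def L_def by measurable
  define l where "l = ln (9::real)"
  have l1: "l \<ge> 1" "l \<ge> 2" using ell by (auto simp: l_def)
  have LI: "L (1/\<kappa>) \<ge> 1" using Lge by simp
  have p1: "(\<integral>\<^sup>+ s. ennreal (f s) * indicator {1..A} s \<partial>lborel) \<le> ennreal (L (1/\<kappa>) * L \<kappa> powr (1-q))"
  proof -
    have "(\<integral>\<^sup>+ s. ennreal (f s) * indicator {1..A} s \<partial>lborel) \<le> (\<integral>\<^sup>+ s. ennreal (l powr (-q) * (1/s)) * indicator {1..A} s \<partial>lborel)"
    proof (rule MONO)
      fix s assume s: "s \<in> {1..A}"
      have "L (\<kappa> * s^4) powr (-q) \<le> l powr (-q)" using powr_neg_mono[of l "L (\<kappa> * s^4)" q] Lge l1 q unfolding l_def by simp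
      then show "f s \<le> l powr (-q) * (1/s)" unfolding f_def using s
        by (simp add: divide_right_mono)
    qed
    also have "\<dots> = ennreal (l powr (-q) * (ln A - ln 1))" by (rule T3C) (use A1 in auto)
    also have "l powr (-q) * (ln A - ln 1) \<le> L (1/\<kappa>) * L \<kappa> powr (1-q)"
    proof (cases "\<kappa> \<ge> 9")
      case True
      then have "(9/\<kappa>) powr (1/4) \<le> 1" using kap by (simp add: powr_le1)
      then have "A = 1" unfolding A_def by simp
      then show ?thesis using LI by simp
    next
      case False
      then have LK: "L \<kappa> = l" using Lsmall[of \<kappa>] l_def by simp
      have "(9/\<kappa>) powr (1/4) \<ge> 1" using False kap by (intro ge_one_powr_ge_zero) auto
      then have "A = (9/\<kappa>) powr (1/4)" unfolding A_def by simp
      then have "ln A = (ln 9 - ln \<kappa>) / 4" using kap by (simp add: ln_powr ln_div)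
      also have "\<dots> \<le> L (1/\<kappa>)" using Linv[OF kap] LI by simp
      finally have lnA: "ln A - ln 1 \<le> L (1/\<kappa>)" by simp
      have lnA0: "ln A - ln 1 \<ge> 0" using A1 by simp
      have "l powr (-q) * (ln A - ln 1) \<le> l powr (1-q) * L (1/\<kappa>)"
        using l1 lnA lnA0 by (intro mult_mono powr_mono) auto
      then show ?thesis using LK by (simp add: mult.commute)
    qed
    finally show ?thesis by (simp add: ennreal_leI)
  qed
  have p2: "(\<integral>\<^sup>+ s. ennreal (f s) * indicator {A ..} s \<partial>lborel) = ennreal (1 * L \<kappa> powr (1-q) / (4*(q-1)))"
  proof -
    have "(\<integral>\<^sup>+ s. ennreal (f s) * indicator {A ..} s \<partial>lborel)
       = (\<integral>\<^sup>+ s. ennreal (1 * (1/s * ln (\<kappa> * s powr 4) powr (-q))) * indicator {A ..} s \<partial>lborel)"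
    proof (intro nn_integral_cong)
      fix s show "ennreal (f s) * indicator {A ..} s = ennreal (1 * (1/s * ln (\<kappa> * s powr 4) powr (-q))) * indicator {A ..} s"
      proof (cases "s \<ge> A")
        case True
        then have s: "s > 0" using A1 by simp
        have s4: "s powr 4 = s^4" using s by (simp add: powr_realpow)
        have "A powr 4 \<le> s powr 4" using True A1 by (intro powr_mono2) auto
        then have big: "\<kappa> * s^4 \<ge> 9" using AM Mge(1)[of \<kappa>] kap s4
          by (smt (verit) mult_left_mono)
        have "L (\<kappa> * s^4) = ln (\<kappa> * s^4)" using big by (simp add: Lbig)
        then have "f s = 1 * (1/s * ln (\<kappa> * s powr 4) powr (-q))"
          unfolding f_def using s4 by simp
        then show ?thesis by simp
      qed simp
    qed
    also have "\<dots> = ennreal (1 * ln (\<kappa> * A powr 4) powr (1-q) / (4 * (q-1)))"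
    proof (rule T2n[where k=4 and a=A and C="1"])
      show "\<kappa> * A powr 4 > 1" using AM Mge(1)[of \<kappa>] by linarith
    qed (use kap A1 q in auto)
    finally show ?thesis using AM by (simp add: L_def)
  qed
  have p2': "1 * L \<kappa> powr (1-q) / (4*(q-1)) \<le> L (1/\<kappa>) * L \<kappa> powr (1-q) / (4*(q-1))"
    using LI q by (intro divide_right_mono mult_right_mono) auto
  have "(\<integral>\<^sup>+ s. ennreal (f s) * indicator {1 ..} s \<partial>lborel)
     \<le> ennreal (L (1/\<kappa>) * L \<kappa> powr (1-q) + L (1/\<kappa>) * L \<kappa> powr (1-q) / (4*(q-1)))"
    by (rule order_trans[OF SPLIT[OF fm, of 1 A] ADD[OF p1 LE_TRANS[OF p2[THEN eq_refl] p2']]]) (use q LI in auto)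
  also have "L (1/\<kappa>) * L \<kappa> powr (1-q) + L (1/\<kappa>) * L \<kappa> powr (1-q) / (4*(q-1))
     = (1 + 1/(4*(q-1))) * L (1/\<kappa>) * L \<kappa> powr (1-q)"
    using q by (simp add: field_simps)
  finally show ?thesis unfolding f_def .
qed

lemma CMULT:
  fixes g :: "real \<Rightarrow> real"
  assumes [measurable]: "g \<in> borel_measurable borel" and C: "C \<ge> 0" and [measurable]: "A \<in> sets borel"
  shows "(\<integral>\<^sup>+ s. ennreal (C * g s) * indicator A s \<partial>lborel) = ennreal C * (\<integral>\<^sup>+ s. ennreal (g s) * indicator A s \<partial>lborel)"
proof -
  have "(\<integral>\<^sup>+ s. ennreal (C * g s) * indicator A s \<partial>lborel) = (\<integral>\<^sup>+ s. ennreal C * (ennreal (g s) * indicator A s) \<partial>lborel)"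
    using C by (intro nn_integral_cong) (auto simp: ennreal_mult' split: split_indicator)
  also have "\<dots> = ennreal C * (\<integral>\<^sup>+ s. ennreal (g s) * indicator A s \<partial>lborel)"
    by (rule nn_integral_cmult) measurable
  finally show ?thesis .
qed

lemma T1C:
  fixes d C :: real
  assumes d: "d \<ge> 0" and C: "C \<ge> 0"
  shows "(\<integral>\<^sup>+ x. ennreal (C * \<bar>x - 1\<bar> powr (-1/2)) * indicator {1-d..1+d} x \<partial>lborel) \<le> ennreal (C * (4 * sqrt d))"
proof -
  have "(\<integral>\<^sup>+ x. ennreal (C * \<bar>x - 1\<bar> powr (-1/2)) * indicator {1-d..1+d} x \<partial>lborel)
     = ennreal C * (\<integral>\<^sup>+ x. ennreal (\<bar>x - 1\<bar> powr (-1/2)) * indicator {1-d..1+d} x \<partial>lborel)"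
    by (rule CMULT) (use C in auto)
  also have "\<dots> \<le> ennreal C * ennreal (4 * sqrt d)" by (rule mult_left_mono[OF T1[OF d]]) auto
  also have "\<dots> = ennreal (C * (4 * sqrt d))" using C by (simp add: ennreal_mult')
  finally show ?thesis .
qed

lemma Lsqrt: "L (\<kappa> * M \<kappa> powr (-1/2)) \<ge> L \<kappa> / 2" if k: "\<kappa> > 0" for \<kappa> :: real
proof (cases "\<kappa> \<ge> 9")
  case True
  then have "M \<kappa> = \<kappa>" by (simp add: M_def)
  then have e: "\<kappa> * M \<kappa> powr (-1/2) = sqrt \<kappa>" using k
    by (simp add: powr_minus_divide powr_half_sqrt real_div_sqrt)
  have "L (sqrt \<kappa>) \<ge> ln (sqrt \<kappa>)" unfolding L_def M_def using k by simp
  moreover have "ln (sqrt \<kappa>) = ln \<kappa> / 2" using k by (simp add: ln_sqrt)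
  moreover have "L \<kappa> = ln \<kappa>" using True by (simp add: Lbig)
  ultimately show ?thesis using e by simp
next
  case False
  then have "L \<kappa> = ln 9" by (simp add: Lsmall)
  then show ?thesis using Lge(1)[of "\<kappa> * M \<kappa> powr (-1/2)"] ell by simp
qed

lemma NEAR:
  fixes \<kappa> q :: real
  assumes kap: "\<kappa> > 0" and q: "q > 1"
  shows "(\<integral>\<^sup>+ s. ennreal (\<bar>s - 1\<bar> powr (-1/2) * L (\<kappa> * (s-1)^2) powr (-q)) * indicator {0..2} s \<partial>lborel)
      \<le> ennreal ((4 * 2 powr q + 4 * (8*(q-1)) powr (q-1)) * L \<kappa> powr (1-q))"
proof -
  define t0 where "t0 = M \<kappa> powr (-1/4)"
  define l where "l = ln (9::real)"
  have l1: "l \<ge> 1" using ell by (auto simp: l_def)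
  have t0p: "t0 > 0" using Mge(1)[of \<kappa>] by (simp add: t0_def)
  have t0sq: "t0^2 = M \<kappa> powr (-1/2)"
  proof -
    have "t0^2 = M \<kappa> powr (-1/4) * M \<kappa> powr (-1/4)" by (simp add: t0_def power2_eq_square)
    also have "\<dots> = M \<kappa> powr (-1/4 + -1/4)" by (simp only: powr_add)
    finally show ?thesis by simp
  qed
  define C1 where "C1 = 2 powr q * L \<kappa> powr (-q)"
  define C2 where "C2 = l powr (-q)"
  have C1p: "C1 \<ge> 0" and C2p: "C2 \<ge> 0" by (auto simp: C1_def C2_def)
  have pw: "ennreal (\<bar>s - 1\<bar> powr (-1/2) * L (\<kappa> * (s-1)^2) powr (-q)) * indicator {0..2} s
     \<le> ennreal (C1 * \<bar>s - 1\<bar> powr (-1/2)) * indicator {1-1..1+1} s + ennreal (C2 * \<bar>s - 1\<bar> powr (-1/2)) * indicator {1-t0..1+t0} s" for s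
  proof (cases "s \<in> {0..2}")
    case False then show ?thesis by simp
  next
    case True
    show ?thesis
    proof (cases "\<bar>s - 1\<bar> \<ge> t0")
      case big: True
      have "t0^2 \<le> (s-1)^2" using power_mono[OF big, of 2] t0p by simp
      then have "\<kappa> * M \<kappa> powr (-1/2) \<le> \<kappa> * (s-1)^2" using t0sq kap by simp
      then have "L \<kappa> / 2 \<le> L (\<kappa> * (s-1)^2)" using Lsqrt[OF kap] Lmono by (meson order_trans)
      then have "L (\<kappa> * (s-1)^2) powr (-q) \<le> (L \<kappa> / 2) powr (-q)"
        using Lge(3)[of \<kappa>] q by (intro powr_neg_mono) auto
      also have "(L \<kappa> / 2) powr (-q) = C1" unfolding C1_def using Lge(3)[of \<kappa>]
        by (simp add: powr_divide powr_minus_divide)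
      finally have h: "L (\<kappa> * (s-1)^2) powr (-q) \<le> C1" .
      have "\<bar>s - 1\<bar> powr (-1/2) * L (\<kappa> * (s-1)^2) powr (-q) \<le> C1 * \<bar>s - 1\<bar> powr (-1/2)"
        using mult_right_mono[OF h powr_ge_zero[of "\<bar>s - 1\<bar>" "-1/2"]] by (simp add: mult.commute)
      then have "ennreal (\<bar>s - 1\<bar> powr (-1/2) * L (\<kappa> * (s-1)^2) powr (-q)) \<le> ennreal (C1 * \<bar>s - 1\<bar> powr (-1/2))"
        by (rule ennreal_leI)
      then show ?thesis using True by (simp add: add_increasing2)
    next
      case small: False
      have h: "L (\<kappa> * (s-1)^2) powr (-q) \<le> l powr (-q)"
        using powr_neg_mono[of l "L (\<kappa> * (s-1)^2)" q] Lge l1 q unfolding l_def by simp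
      have "\<bar>s - 1\<bar> powr (-1/2) * L (\<kappa> * (s-1)^2) powr (-q) \<le> C2 * \<bar>s - 1\<bar> powr (-1/2)"
        unfolding C2_def using mult_right_mono[OF h powr_ge_zero[of "\<bar>s - 1\<bar>" "-1/2"]] by (simp add: mult.commute)
      then have "ennreal (\<bar>s - 1\<bar> powr (-1/2) * L (\<kappa> * (s-1)^2) powr (-q)) \<le> ennreal (C2 * \<bar>s - 1\<bar> powr (-1/2))"
        by (rule ennreal_leI)
      moreover have "s \<in> {1-t0..1+t0}" using small by auto
      ultimately show ?thesis using True by (simp add: add_increasing)
    qed
  qed
  have "(\<integral>\<^sup>+ s. ennreal (\<bar>s - 1\<bar> powr (-1/2) * L (\<kappa> * (s-1)^2) powr (-q)) * indicator {0..2} s \<partial>lborel)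
     \<le> (\<integral>\<^sup>+ s. ennreal (C1 * \<bar>s - 1\<bar> powr (-1/2)) * indicator {1-1..1+1} s + ennreal (C2 * \<bar>s - 1\<bar> powr (-1/2)) * indicator {1-t0..1+t0} s \<partial>lborel)"
    by (rule nn_integral_mono) (rule pw)
  also have "\<dots> = (\<integral>\<^sup>+ s. ennreal (C1 * \<bar>s - 1\<bar> powr (-1/2)) * indicator {1-1..1+1} s \<partial>lborel) + (\<integral>\<^sup>+ s. ennreal (C2 * \<bar>s - 1\<bar> powr (-1/2)) * indicator {1-t0..1+t0} s \<partial>lborel)"
    by (rule nn_integral_add) measurable
  also have "\<dots> \<le> ennreal (C1 * (4 * sqrt 1) + C2 * (4 * sqrt t0))"
    by (rule ADD[OF T1C T1C]) (use C1p C2p t0p in auto)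
  also have "C1 * (4 * sqrt 1) + C2 * (4 * sqrt t0) \<le> (4 * 2 powr q + 4 * (8*(q-1)) powr (q-1)) * L \<kappa> powr (1-q)"
  proof -
    have a: "C1 * (4 * sqrt 1) \<le> 4 * 2 powr q * L \<kappa> powr (1-q)"
    proof -
      have "L \<kappa> powr (-q) \<le> L \<kappa> powr (1-q)" using Lge(4)[of \<kappa>] by (intro powr_mono) auto
      then show ?thesis unfolding C1_def by simp
    qed
    have MK: "M \<kappa> \<ge> 1" using Mge(1)[of \<kappa>] by simp
    have pl: "ln (M \<kappa>) powr (q-1) \<le> (8*(q-1)) powr (q-1) * M \<kappa> powr (1/8)"
      by (rule polylog[OF MK]) (use q in simp)
    have st: "sqrt t0 = M \<kappa> powr (-1/8)"
    proof -
      have "sqrt t0 = t0 powr (1/2)" using t0p by (simp add: powr_half_sqrt)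
      also have "\<dots> = M \<kappa> powr (-1/4 * (1/2))" by (simp add: t0_def powr_powr)
      finally show ?thesis by simp
    qed
    have "M \<kappa> powr (-1/8) * ln (M \<kappa>) powr (q-1) \<le> M \<kappa> powr (-1/8) * ((8*(q-1)) powr (q-1) * M \<kappa> powr (1/8))"
      by (rule mult_left_mono[OF pl]) simp
    also have "\<dots> = (8*(q-1)) powr (q-1)"
      using Mge(1)[of \<kappa>] by (simp add: powr_add[symmetric])
    finally have m1: "M \<kappa> powr (-1/8) * ln (M \<kappa>) powr (q-1) \<le> (8*(q-1)) powr (q-1)" .
    have lnpos: "ln (M \<kappa>) > 0" using Lge(3)[of \<kappa>] by (simp add: L_def)
    have "M \<kappa> powr (-1/8) \<le> (8*(q-1)) powr (q-1) * ln (M \<kappa>) powr (1-q)"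
    proof -
      have e: "ln (M \<kappa>) powr (q-1) * ln (M \<kappa>) powr (1-q) = 1" using lnpos by (simp add: powr_add[symmetric])
      have "M \<kappa> powr (-1/8) = M \<kappa> powr (-1/8) * ln (M \<kappa>) powr (q-1) * ln (M \<kappa>) powr (1-q)"
        using e by (simp add: mult.assoc)
      also have "\<dots> \<le> (8*(q-1)) powr (q-1) * ln (M \<kappa>) powr (1-q)"
        by (rule mult_right_mono[OF m1]) simp
      finally show ?thesis .
    qed
    then have "sqrt t0 \<le> (8*(q-1)) powr (q-1) * L \<kappa> powr (1-q)" using st by (simp add: L_def)
    moreover have "C2 \<le> 1" unfolding C2_def using l1 q using ge_one_powr_ge_zero[of l q] by (simp add: powr_minus_divide)
    ultimately have b: "C2 * (4 * sqrt t0) \<le> 4 * (8*(q-1)) powr (q-1) * L \<kappa> powr (1-q)"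
      using mult_mono[of C2 1 "4* sqrt t0" "4*((8*(q-1)) powr (q-1) * L \<kappa> powr (1-q))"] C2p t0p by simp
    show ?thesis using a b by (simp add: algebra_simps)
  qed
  finally show ?thesis by (simp add: ennreal_leI)
qed

lemma GT:
  fixes f :: "real \<Rightarrow> real" and a C k q \<kappa> :: real
  assumes k: "k > 0" and kap: "\<kappa> > 0" and a: "a > 0" and ka: "\<kappa> * a powr k > 1" and q: "q > 1" and C: "C \<ge> 0"
    and le: "\<And>s. s \<in> {a ..} \<Longrightarrow> f s \<le> C * (1/s * ln (\<kappa> * s powr k) powr (-q))"
  shows "(\<integral>\<^sup>+ s. ennreal (f s) * indicator {a ..} s \<partial>lborel) \<le> ennreal (C * ln (\<kappa> * a powr k) powr (1-q) / (k * (q-1)))"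
  using order_trans[OF MONO[of "{a ..}" f, OF le] T2n[OF k kap a ka q C, THEN eq_refl]] .

lemma pow_half: "s > 0 \<Longrightarrow> \<kappa> > 0 \<Longrightarrow> (\<kappa> * s^2) powr (-1/2) = \<kappa> powr (-1/2) * (1/s)"
  for s \<kappa> :: real
proof -
  assume s: "s > 0" and kap: "\<kappa> > 0"
  have s2: "s powr 2 = s^2" using s by (simp add: powr_realpow)
  have "(\<kappa> * s^2) powr (-1/2) = \<kappa> powr (-1/2) * (s powr 2) powr (-1/2)"
    using s kap by (simp add: powr_mult s2)
  also have "(s powr 2) powr (-1/2) = s powr (-1)" by (simp add: powr_powr)
  also have "s powr (-1) = 1/s" using s by (simp add: powr_minus_divide)
  finally show ?thesis .
qed

lemma P3:
  fixes \<kappa>1 \<kappa>2 r :: real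
  assumes k1: "\<kappa>1 > 0" and k2: "\<kappa>2 > 0" and r: "r > 1"
  shows "(\<integral>\<^sup>+ s\<in>{0..}. ennreal (M (\<kappa>1 * s\<^sup>2 + \<kappa>2) powr (-1/2) * L (\<kappa>1 * s\<^sup>2 + \<kappa>2) powr (-r)) \<partial>lborel)
     \<le> ennreal ((1 + 1/(2*(r-1))) * \<kappa>1 powr (-1/2) * L \<kappa>2 powr (1-r))"
proof -
  define f where "f = (\<lambda>s. M (\<kappa>1 * s\<^sup>2 + \<kappa>2) powr (-1/2) * L (\<kappa>1 * s\<^sup>2 + \<kappa>2) powr (-r))"
  define X where "X = M \<kappa>2"
  define a where "a = (X/\<kappa>1) powr (1/2)"
  have X9: "X \<ge> 9" using Mge by (simp add: X_def)
  have LX: "L \<kappa>2 = ln X" by (simp add: X_def L_def)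
  have ap: "a > 0" using X9 k1 by (simp add: a_def)
  have aX: "\<kappa>1 * a powr 2 = X" using X9 k1 by (simp add: a_def powr_powr)
  have fm: "f \<in> borel_measurable borel" unfolding f_def M_def L_def by measurable
  have p1: "(\<integral>\<^sup>+ s. ennreal (f s) * indicator {0..a} s \<partial>lborel) \<le> ennreal (\<kappa>1 powr (-1/2) * L \<kappa>2 powr (1-r))"
  proof -
    have "(\<integral>\<^sup>+ s. ennreal (f s) * indicator {0..a} s \<partial>lborel) \<le> ennreal (X powr (-1/2) * L \<kappa>2 powr (-r) * (a - 0))"
    proof (rule CONSTB)
      fix s assume "s \<in> {0..a}"
      have y: "\<kappa>1 * s\<^sup>2 + \<kappa>2 \<ge> \<kappa>2" using k1 by simp
      have "M (\<kappa>1 * s\<^sup>2 + \<kappa>2) powr (-1/2) \<le> X powr (-1/2)"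
        using powr_neg_mono[of X "M (\<kappa>1 * s\<^sup>2 + \<kappa>2)" "1/2"] Mmono[OF y] X9 by (simp add: X_def)
      moreover have "L (\<kappa>1 * s\<^sup>2 + \<kappa>2) powr (-r) \<le> L \<kappa>2 powr (-r)"
        using powr_neg_mono[of "L \<kappa>2" "L (\<kappa>1 * s\<^sup>2 + \<kappa>2)" r] Lmono[OF y] Lge(3)[of \<kappa>2] r by simp
      ultimately show "f s \<le> X powr (-1/2) * L \<kappa>2 powr (-r)" unfolding f_def
        by (intro mult_mono) auto
    qed (use ap in auto)
    also have "X powr (-1/2) * L \<kappa>2 powr (-r) * (a - 0) = (X powr (-1/2) * X powr (1/2)) * \<kappa>1 powr (-1/2) * L \<kappa>2 powr (-r)"
      using X9 k1 by (simp add: a_def powr_divide powr_minus_divide)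
    also have "X powr (-1/2) * X powr (1/2) = 1" using X9 by (simp add: powr_add[symmetric])
    also have "1 * \<kappa>1 powr (-1/2) * L \<kappa>2 powr (-r) \<le> \<kappa>1 powr (-1/2) * L \<kappa>2 powr (1-r)"
      using mult_left_mono[OF powr_mono[of "-r" "1-r" "L \<kappa>2"], of "\<kappa>1 powr (-1/2)"] Lge(4)[of \<kappa>2] by simp
    finally show ?thesis by (simp add: ennreal_leI)
  qed
  have p2: "(\<integral>\<^sup>+ s. ennreal (f s) * indicator {a ..} s \<partial>lborel) \<le> ennreal (\<kappa>1 powr (-1/2) * ln (\<kappa>1 * a powr 2) powr (1-r) / (2 * (r-1)))"
  proof (rule GT)
    show "\<kappa>1 * a powr 2 > 1" using aX X9 by simp
    fix s assume "s \<in> {a ..}"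
    then have sa: "s \<ge> a" by simp
    then have s: "s > 0" using ap by simp
    have s2: "s powr 2 = s^2" using s by (simp add: powr_realpow)
    have "a powr 2 \<le> s powr 2" using sa ap by (intro powr_mono2) auto
    then have big: "\<kappa>1 * s^2 \<ge> 9" using aX X9 k1 s2 by (smt (verit) mult_left_mono)
    have y: "\<kappa>1 * s\<^sup>2 + \<kappa>2 \<ge> \<kappa>1 * s\<^sup>2" using k2 by simp
    have "M (\<kappa>1 * s\<^sup>2 + \<kappa>2) powr (-1/2) \<le> (\<kappa>1 * s\<^sup>2) powr (-1/2)"
      using powr_neg_mono[of "\<kappa>1 * s\<^sup>2" "M (\<kappa>1 * s\<^sup>2 + \<kappa>2)" "1/2"] Mge(2)[of "\<kappa>1 * s\<^sup>2 + \<kappa>2"] y big by simp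
    also have "\<dots> = \<kappa>1 powr (-1/2) * (1/s)" by (rule pow_half[OF s k1])
    finally have m: "M (\<kappa>1 * s\<^sup>2 + \<kappa>2) powr (-1/2) \<le> \<kappa>1 powr (-1/2) * (1/s)" .
    have "L (\<kappa>1 * s\<^sup>2 + \<kappa>2) powr (-r) \<le> L (\<kappa>1 * s\<^sup>2) powr (-r)"
      using powr_neg_mono[of "L (\<kappa>1 * s\<^sup>2)" "L (\<kappa>1 * s\<^sup>2 + \<kappa>2)" r] Lmono[OF y] Lge(3) r by simp
    also have "L (\<kappa>1 * s\<^sup>2) = ln (\<kappa>1 * s powr 2)" using big s2 by (simp add: Lbig)
    finally have l: "L (\<kappa>1 * s\<^sup>2 + \<kappa>2) powr (-r) \<le> ln (\<kappa>1 * s powr 2) powr (-r)" .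
    have "f s \<le> (\<kappa>1 powr (-1/2) * (1/s)) * ln (\<kappa>1 * s powr 2) powr (-r)"
      unfolding f_def by (rule mult_mono[OF m l]) (use s in auto)
    then show "f s \<le> \<kappa>1 powr (-1/2) * (1/s * ln (\<kappa>1 * s powr 2) powr (-r))" by (simp add: mult.assoc)
  qed (use k1 ap r in auto)
  have p2': "\<kappa>1 powr (-1/2) * ln (\<kappa>1 * a powr 2) powr (1-r) / (2 * (r-1)) = \<kappa>1 powr (-1/2) * L \<kappa>2 powr (1-r) / (2 * (r-1))"
    using aX LX by simp
  have "(\<integral>\<^sup>+ s. ennreal (f s) * indicator {0 ..} s \<partial>lborel)
     \<le> ennreal (\<kappa>1 powr (-1/2) * L \<kappa>2 powr (1-r) + \<kappa>1 powr (-1/2) * L \<kappa>2 powr (1-r) / (2 * (r-1)))"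
    by (rule order_trans[OF SPLIT[OF fm, of 0 a] ADD[OF p1 p2[unfolded p2']]]) (use r in auto)
  also have "\<kappa>1 powr (-1/2) * L \<kappa>2 powr (1-r) + \<kappa>1 powr (-1/2) * L \<kappa>2 powr (1-r) / (2 * (r-1))
     = (1 + 1/(2*(r-1))) * \<kappa>1 powr (-1/2) * L \<kappa>2 powr (1-r)"
    using r by (simp add: field_simps)
  finally show ?thesis unfolding f_def .
qed

lemma P4:
  fixes \<kappa>1 \<kappa>2 r :: real
  assumes k1: "\<kappa>1 > 0" and k2: "\<kappa>2 > 0" and r: "r > 1"
  shows "(\<integral>\<^sup>+ s\<in>{0..}. ennreal ((\<kappa>1 * s\<^sup>2 + \<kappa>2) powr (-1/2) * L (\<kappa>1 * s\<^sup>2 + \<kappa>2) powr (-r)) \<partial>lborel)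
     \<le> ennreal ((2 + 1/(2*(r-1))) * \<kappa>1 powr (-1/2) * L (1/\<kappa>2) * L \<kappa>2 powr (1-r))"
proof (cases "\<kappa>2 \<ge> 9")
  case True
  have "(\<integral>\<^sup>+ s\<in>{0..}. ennreal ((\<kappa>1 * s\<^sup>2 + \<kappa>2) powr (-1/2) * L (\<kappa>1 * s\<^sup>2 + \<kappa>2) powr (-r)) \<partial>lborel)
     = (\<integral>\<^sup>+ s\<in>{0..}. ennreal (M (\<kappa>1 * s\<^sup>2 + \<kappa>2) powr (-1/2) * L (\<kappa>1 * s\<^sup>2 + \<kappa>2) powr (-r)) \<partial>lborel)"
  proof (intro nn_integral_cong)
    fix s
    have "\<kappa>1 * s\<^sup>2 \<ge> 0" using k1 by simp
    then have "M (\<kappa>1 * s\<^sup>2 + \<kappa>2) = \<kappa>1 * s\<^sup>2 + \<kappa>2" using True by (simp add: M_def)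
    then show "ennreal ((\<kappa>1 * s\<^sup>2 + \<kappa>2) powr (-1/2) * L (\<kappa>1 * s\<^sup>2 + \<kappa>2) powr (-r)) * indicator {0..} s
      = ennreal (M (\<kappa>1 * s\<^sup>2 + \<kappa>2) powr (-1/2) * L (\<kappa>1 * s\<^sup>2 + \<kappa>2) powr (-r)) * indicator {0..} s" by simp
  qed
  also have "\<dots> \<le> ennreal ((1 + 1/(2*(r-1))) * \<kappa>1 powr (-1/2) * L \<kappa>2 powr (1-r))"
    by (rule P3[OF k1 k2 r])
  also have "(1 + 1/(2*(r-1))) * \<kappa>1 powr (-1/2) * L \<kappa>2 powr (1-r) \<le> (2 + 1/(2*(r-1))) * \<kappa>1 powr (-1/2) * L (1/\<kappa>2) * L \<kappa>2 powr (1-r)"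
  proof -
    have "(1 + 1/(2*(r-1))) * (\<kappa>1 powr (-1/2) * L \<kappa>2 powr (1-r)) \<le> (2 + 1/(2*(r-1))) * (\<kappa>1 powr (-1/2) * L \<kappa>2 powr (1-r))"
      by (intro mult_right_mono) auto
    also have "\<dots> \<le> (2 + 1/(2*(r-1))) * (\<kappa>1 powr (-1/2) * L \<kappa>2 powr (1-r)) * L (1/\<kappa>2)"
    proof -
      have "0 \<le> (2 + 1/(2*(r-1))) * (\<kappa>1 powr (-1/2) * L \<kappa>2 powr (1-r))" using r by simp
      from mult_left_mono[OF Lge(4)[of "1/\<kappa>2"] this] show ?thesis by simp
    qed
    finally show ?thesis by (simp add: ac_simps)
  qed
  finally show ?thesis by (simp add: ennreal_leI)
next
  case False
  define f where "f = (\<lambda>s. (\<kappa>1 * s\<^sup>2 + \<kappa>2) powr (-1/2) * L (\<kappa>1 * s\<^sup>2 + \<kappa>2) powr (-r))"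
  define l where "l = ln (9::real)"
  have l1: "l \<ge> 1" using ell by (auto simp: l_def)
  have LK: "L \<kappa>2 = l" using False by (simp add: Lsmall l_def)
  define s0 where "s0 = (\<kappa>2/\<kappa>1) powr (1/2)"
  define a where "a = (9/\<kappa>1) powr (1/2)"
  have s0p: "s0 > 0" using k1 k2 by (simp add: s0_def)
  have s0a: "s0 \<le> a" unfolding s0_def a_def using False k1 k2
    by (intro powr_mono2) (auto simp: divide_right_mono)
  have ap: "a > 0" using k1 by (simp add: a_def)
  have a9: "\<kappa>1 * a powr 2 = 9" using k1 by (simp add: a_def powr_powr)
  have fm: "f \<in> borel_measurable borel" unfolding f_def M_def L_def by measurable
  have LI: "L (1/\<kappa>2) \<ge> 1" using Lge by simp
  have fle: "f s \<le> \<kappa>1 powr (-1/2) * (1/s) * L (\<kappa>1 * s\<^sup>2) powr (-r)" if s: "s > 0" for s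
  proof -
    have y: "\<kappa>1 * s\<^sup>2 + \<kappa>2 \<ge> \<kappa>1 * s\<^sup>2" using k2 by simp
    have p: "\<kappa>1 * s\<^sup>2 > 0" using k1 s by simp
    have "(\<kappa>1 * s\<^sup>2 + \<kappa>2) powr (-1/2) \<le> (\<kappa>1 * s\<^sup>2) powr (-1/2)"
      using powr_neg_mono[of "\<kappa>1 * s\<^sup>2" "\<kappa>1 * s\<^sup>2 + \<kappa>2" "1/2"] y p by simp
    also have "\<dots> = \<kappa>1 powr (-1/2) * (1/s)" by (rule pow_half[OF s k1])
    finally have m: "(\<kappa>1 * s\<^sup>2 + \<kappa>2) powr (-1/2) \<le> \<kappa>1 powr (-1/2) * (1/s)" .
    have l: "L (\<kappa>1 * s\<^sup>2 + \<kappa>2) powr (-r) \<le> L (\<kappa>1 * s\<^sup>2) powr (-r)"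
      using powr_neg_mono[of "L (\<kappa>1 * s\<^sup>2)" "L (\<kappa>1 * s\<^sup>2 + \<kappa>2)" r] Lmono[OF y] Lge(3) r by simp
    show ?thesis unfolding f_def by (rule mult_mono[OF m l]) (use s in auto)
  qed
  have p1: "(\<integral>\<^sup>+ s. ennreal (f s) * indicator {0..s0} s \<partial>lborel) \<le> ennreal (\<kappa>1 powr (-1/2) * l powr (-r))"
  proof -
    have "(\<integral>\<^sup>+ s. ennreal (f s) * indicator {0..s0} s \<partial>lborel) \<le> ennreal (\<kappa>2 powr (-1/2) * l powr (-r) * (s0 - 0))"
    proof (rule CONSTB)
      fix s assume "s \<in> {0..s0}"
      have y: "\<kappa>1 * s\<^sup>2 + \<kappa>2 \<ge> \<kappa>2" using k1 by simp
      have "(\<kappa>1 * s\<^sup>2 + \<kappa>2) powr (-1/2) \<le> \<kappa>2 powr (-1/2)"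
        using powr_neg_mono[of \<kappa>2 "\<kappa>1 * s\<^sup>2 + \<kappa>2" "1/2"] y k2 by simp
      moreover have "L (\<kappa>1 * s\<^sup>2 + \<kappa>2) powr (-r) \<le> l powr (-r)"
        using powr_neg_mono[of l "L (\<kappa>1 * s\<^sup>2 + \<kappa>2)" r] Lge(1) l1 r unfolding l_def by simp
      ultimately show "f s \<le> \<kappa>2 powr (-1/2) * l powr (-r)" unfolding f_def
        by (intro mult_mono) auto
    qed (use s0p in auto)
    also have "\<kappa>2 powr (-1/2) * l powr (-r) * (s0 - 0) = (\<kappa>2 powr (-1/2) * \<kappa>2 powr (1/2)) * \<kappa>1 powr (-1/2) * l powr (-r)"
      using k1 k2 by (simp add: s0_def powr_divide powr_minus_divide)
    also have "\<kappa>2 powr (-1/2) * \<kappa>2 powr (1/2) = 1" using k2 by (simp add: powr_add[symmetric])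
    finally show ?thesis by simp
  qed
  have p2: "(\<integral>\<^sup>+ s. ennreal (f s) * indicator {s0..a} s \<partial>lborel) \<le> ennreal (\<kappa>1 powr (-1/2) * l powr (-r) * L (1/\<kappa>2))"
  proof -
    have "(\<integral>\<^sup>+ s. ennreal (f s) * indicator {s0..a} s \<partial>lborel) \<le> (\<integral>\<^sup>+ s. ennreal ((\<kappa>1 powr (-1/2) * l powr (-r)) * (1/s)) * indicator {s0..a} s \<partial>lborel)"
    proof (rule MONO)
      fix s assume "s \<in> {s0..a}"
      then have s: "s > 0" using s0p by simp
      have "L (\<kappa>1 * s\<^sup>2) powr (-r) \<le> l powr (-r)"
        using powr_neg_mono[of l "L (\<kappa>1 * s\<^sup>2)" r] Lge(1) l1 r unfolding l_def by simp
      then have "\<kappa>1 powr (-1/2) * (1/s) * L (\<kappa>1 * s\<^sup>2) powr (-r) \<le> \<kappa>1 powr (-1/2) * (1/s) * l powr (-r)"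
        by (intro mult_left_mono) (use s in auto)
      then show "f s \<le> (\<kappa>1 powr (-1/2) * l powr (-r)) * (1/s)" using fle[OF s] by (simp add: ac_simps)
    qed
    also have "\<dots> = ennreal ((\<kappa>1 powr (-1/2) * l powr (-r)) * (ln a - ln s0))"
      by (rule T3C) (use s0p s0a in auto)
    also have "ln a - ln s0 = (ln 9 - ln \<kappa>2) / 2"
      using k1 k2 by (simp add: a_def s0_def ln_powr ln_div field_simps)
    also have "\<dots> \<le> L (1/\<kappa>2)" using Linv[OF k2] LI by simp
    finally show ?thesis by (simp add: ennreal_leI mult_left_mono)
  qed
  have p3: "(\<integral>\<^sup>+ s. ennreal (f s) * indicator {a ..} s \<partial>lborel) \<le> ennreal (\<kappa>1 powr (-1/2) * ln (\<kappa>1 * a powr 2) powr (1-r) / (2 * (r-1)))"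
  proof (rule GT)
    show "\<kappa>1 * a powr 2 > 1" using a9 by simp
    fix s assume "s \<in> {a ..}"
    then have sa: "s \<ge> a" by simp
    then have s: "s > 0" using ap by simp
    have s2: "s powr 2 = s^2" using s by (simp add: powr_realpow)
    have "a powr 2 \<le> s powr 2" using sa ap by (intro powr_mono2) auto
    then have big: "\<kappa>1 * s^2 \<ge> 9" using a9 k1 s2 by (smt (verit) mult_left_mono)
    have "L (\<kappa>1 * s\<^sup>2) = ln (\<kappa>1 * s powr 2)" using big s2 by (simp add: Lbig)
    then show "f s \<le> \<kappa>1 powr (-1/2) * (1/s * ln (\<kappa>1 * s powr 2) powr (-r))" using fle[OF s] by (simp add: mult.assoc)
  qed (use k1 ap r in auto)
  have p3': "\<kappa>1 powr (-1/2) * ln (\<kappa>1 * a powr 2) powr (1-r) / (2 * (r-1)) = \<kappa>1 powr (-1/2) * l powr (1-r) / (2 * (r-1))"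
    using a9 l_def by simp
  have sp: "(\<integral>\<^sup>+ s. ennreal (f s) * indicator {0 ..} s \<partial>lborel)
     \<le> (\<integral>\<^sup>+ s. ennreal (f s) * indicator {0..s0} s \<partial>lborel) + ((\<integral>\<^sup>+ s. ennreal (f s) * indicator {s0..a} s \<partial>lborel) + (\<integral>\<^sup>+ s. ennreal (f s) * indicator {a ..} s \<partial>lborel))"
    using SPLIT[OF fm, of 0 s0] SPLIT[OF fm, of s0 a] by (meson add_left_mono order_trans)
  have "(\<integral>\<^sup>+ s. ennreal (f s) * indicator {0 ..} s \<partial>lborel)
     \<le> ennreal (\<kappa>1 powr (-1/2) * l powr (-r) + (\<kappa>1 powr (-1/2) * l powr (-r) * L (1/\<kappa>2) + \<kappa>1 powr (-1/2) * l powr (1-r) / (2 * (r-1))))"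
    by (rule order_trans[OF sp ADD[OF p1 ADD[OF p2 p3[unfolded p3']]]]) (use r LI in auto)
  also have "\<kappa>1 powr (-1/2) * l powr (-r) + (\<kappa>1 powr (-1/2) * l powr (-r) * L (1/\<kappa>2) + \<kappa>1 powr (-1/2) * l powr (1-r) / (2 * (r-1)))
     \<le> (2 + 1/(2*(r-1))) * \<kappa>1 powr (-1/2) * L (1/\<kappa>2) * L \<kappa>2 powr (1-r)"
  proof -
    define K where "K = \<kappa>1 powr (-1/2)"
    define P where "P = l powr (1-r)"
    define LL where "LL = L (1/\<kappa>2)"
    have Kp: "K \<ge> 0" and Pp: "P \<ge> 0" by (auto simp: K_def P_def)
    have lr: "l powr (-r) \<le> P" unfolding P_def using l1 by (intro powr_mono) auto
    have LL1: "LL \<ge> 1" using LI by (simp add: LL_def)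
    have r2: "1/(2*(r-1)) \<ge> 0" using r by simp
    have "K * l powr (-r) \<le> K * P * LL" using mult_left_mono[OF lr Kp] mult_left_mono[OF LL1, of "K*P"] Kp Pp by simp
    moreover have "K * l powr (-r) * LL \<le> K * P * LL" using mult_left_mono[OF lr Kp] LL1 by (intro mult_right_mono) auto
    moreover have "K * P / (2 * (r-1)) \<le> K * P * LL / (2 * (r-1))"
      using mult_left_mono[OF LL1, of "K*P"] Kp Pp r by (intro divide_right_mono) auto
    ultimately have "K * l powr (-r) + (K * l powr (-r) * LL + K * P / (2 * (r-1))) \<le> K * P * LL + (K * P * LL + K * P * LL / (2 * (r-1)))"
      by linarith
    also have "\<dots> = (2 + 1/(2*(r-1))) * K * LL * P" using r by (simp add: field_simps)
    finally show ?thesis unfolding K_def P_def LL_def LK .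
  qed
  finally show ?thesis unfolding f_def by (simp add: ennreal_leI)
qed

lemma Lquarter: "L (\<kappa>/4) \<ge> L \<kappa> / 2" for \<kappa> :: real
proof -
  have m: "M (\<kappa>/4) \<ge> M \<kappa> / 4" by (auto simp: M_def)
  have "ln (M \<kappa> / 4) \<le> L (\<kappa>/4)" unfolding L_def using m Mge(1)[of \<kappa>] by simp
  moreover have "ln (M \<kappa> / 4) = L \<kappa> - ln 4" using Mge(1)[of \<kappa>] by (simp add: L_def ln_div)
  moreover have "ln (4::real) \<le> ln 9" by simp
  ultimately show ?thesis using Lge(1)[of "\<kappa>/4"] by linarith
qed

lemma Lfour: "L (4 * x) \<le> 2 * L x" for x :: real
proof -
  have m: "M (4 * x) \<le> 4 * M x" by (auto simp: M_def)
  have "L (4 * x) \<le> ln (4 * M x)" unfolding L_def using m Mge(1)[of "4*x"] by simp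
  also have "\<dots> = ln 4 + L x" using Mge(1)[of x] by (simp add: L_def ln_mult)
  finally show ?thesis using Lge(1)[of x] by (smt (verit) ln_le_cancel_iff)
qed

lemma pow_quarter: "t \<noteq> 0 \<Longrightarrow> \<kappa> > 0 \<Longrightarrow> (\<kappa> * t^2) powr (-1/4) = \<kappa> powr (-1/4) * \<bar>t\<bar> powr (-1/2)"
  for t \<kappa> :: real
proof -
  assume t: "t \<noteq> 0" and kap: "\<kappa> > 0"
  have s2: "\<bar>t\<bar> powr 2 = t^2" using t by (simp add: powr_realpow)
  have "(\<kappa> * t^2) powr (-1/4) = \<kappa> powr (-1/4) * (t^2) powr (-1/4)"
    using kap by (simp add: powr_mult)
  also have "(t^2) powr (-1/4) = (\<bar>t\<bar> powr 2) powr (-1/4)" using s2 by simp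
  also have "(\<bar>t\<bar> powr 2) powr (-1/4) = \<bar>t\<bar> powr (-1/2)" using powr_powr[of "\<bar>t\<bar>" 2 "-1/4"] by simp
  finally show ?thesis .
qed

definition CT :: "real \<Rightarrow> real" where "CT q = 1 + 1/(4*(q-1))"
definition CN :: "real \<Rightarrow> real" where "CN q = 4 * 2 powr q + 4 * (8*(q-1)) powr (q-1)"

lemma G1:
  fixes \<kappa> q \<sigma> :: real
  assumes kap: "\<kappa> > 0" and q: "q > 1" and sig: "\<sigma> \<in> {1, -1}"
  shows "(\<integral>\<^sup>+ s. ennreal (M (\<kappa> * (s\<^sup>2 + \<sigma>)\<^sup>2) powr (-1/4) * L (\<kappa> * (s\<^sup>2 + \<sigma>)\<^sup>2) powr (-q)) * indicator {0..} s \<partial>lborel)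
     \<le> ennreal ((1 + CT q + CN q + 4 * CT q * 2 powr (q-1)) * \<kappa> powr (-1/4) * L \<kappa> powr (1-q))"
proof -
  define g where "g = (\<lambda>s. M (\<kappa> * (s\<^sup>2 + \<sigma>)\<^sup>2) powr (-1/4) * L (\<kappa> * (s\<^sup>2 + \<sigma>)\<^sup>2) powr (-q))"
  have gm: "g \<in> borel_measurable borel" unfolding g_def M_def L_def by measurable
  define B where "B = \<kappa> powr (-1/4) * L \<kappa> powr (1-q)"
  have Bp: "B \<ge> 0" by (simp add: B_def)
  have CTp: "CT q \<ge> 0" using q by (simp add: CT_def)
  have CNp: "CN q \<ge> 0" by (simp add: CN_def)
  have TI: "(\<integral>\<^sup>+ s. ennreal (M (\<kappa>' * s^4) powr (-1/4) * L (\<kappa>' * s^4) powr (-q)) * indicator {1 ..} s \<partial>lborel)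
      \<le> ennreal (CT q * \<kappa>' powr (-1/4) * L \<kappa>' powr (1-q))" if "\<kappa>' > 0" for \<kappa>'
    using TAIL_I[OF that q] by (simp add: CT_def)
  have main: "(\<integral>\<^sup>+ s. ennreal (g s) * indicator {0..} s \<partial>lborel) \<le> ennreal ((1 + CT q + CN q + 4 * CT q * 2 powr (q-1)) * B)"
  proof (cases "\<sigma> = 1")
    case True
    have p1: "(\<integral>\<^sup>+ s. ennreal (g s) * indicator {0..1} s \<partial>lborel) \<le> ennreal B"
    proof -
      have "(\<integral>\<^sup>+ s. ennreal (g s) * indicator {0..1} s \<partial>lborel) \<le> ennreal (\<kappa> powr (-1/4) * L \<kappa> powr (-q) * (1 - 0))"
      proof (rule CONSTB)
        fix s :: real assume "s \<in> {0..1}"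
        have u: "(s\<^sup>2 + \<sigma>)\<^sup>2 \<ge> 1" using True by (simp add: one_le_power)
        then have y: "\<kappa> * (s\<^sup>2 + \<sigma>)\<^sup>2 \<ge> \<kappa>" using kap by (simp add: mult_le_cancel_left1)
        have "M (\<kappa> * (s\<^sup>2 + \<sigma>)\<^sup>2) powr (-1/4) \<le> \<kappa> powr (-1/4)"
          using powr_neg_mono[of \<kappa> "M (\<kappa> * (s\<^sup>2 + \<sigma>)\<^sup>2)" "1/4"] Mge(2)[of "\<kappa> * (s\<^sup>2 + \<sigma>)\<^sup>2"] y kap by simp
        moreover have "L (\<kappa> * (s\<^sup>2 + \<sigma>)\<^sup>2) powr (-q) \<le> L \<kappa> powr (-q)"
          using powr_neg_mono[of "L \<kappa>" "L (\<kappa> * (s\<^sup>2 + \<sigma>)\<^sup>2)" q] Lmono[OF y] Lge(3)[of \<kappa>] q by simp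
        ultimately show "g s \<le> \<kappa> powr (-1/4) * L \<kappa> powr (-q)" unfolding g_def by (intro mult_mono) auto
      qed auto
      also have "\<kappa> powr (-1/4) * L \<kappa> powr (-q) * (1 - 0) \<le> B" unfolding B_def
        using mult_left_mono[OF powr_mono[of "-q" "1-q" "L \<kappa>"], of "\<kappa> powr (-1/4)"] Lge(4)[of \<kappa>] by simp
      finally show ?thesis by (simp add: ennreal_leI)
    qed
    have p2: "(\<integral>\<^sup>+ s. ennreal (g s) * indicator {1 ..} s \<partial>lborel) \<le> ennreal (CT q * B)"
    proof -
      have "(\<integral>\<^sup>+ s. ennreal (g s) * indicator {1 ..} s \<partial>lborel) \<le> (\<integral>\<^sup>+ s. ennreal (M (\<kappa> * s^4) powr (-1/4) * L (\<kappa> * s^4) powr (-q)) * indicator {1 ..} s \<partial>lborel)"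
      proof (rule MONO)
        fix s :: real assume "s \<in> {1 ..}"
        then have s: "s \<ge> 1" by simp
        have "s^2 \<le> s\<^sup>2 + \<sigma>" using True by simp
        then have "(s^2)^2 \<le> (s\<^sup>2 + \<sigma>)\<^sup>2" by (intro power_mono) auto
        then have y: "\<kappa> * s^4 \<le> \<kappa> * (s\<^sup>2 + \<sigma>)\<^sup>2" using kap by (simp add: power_mult[symmetric])
        have y0: "\<kappa> * s^4 > 0" using kap s by simp
        have "M (\<kappa> * (s\<^sup>2 + \<sigma>)\<^sup>2) powr (-1/4) \<le> M (\<kappa> * s^4) powr (-1/4)"
          using powr_neg_mono[of "M (\<kappa> * s^4)" "M (\<kappa> * (s\<^sup>2 + \<sigma>)\<^sup>2)" "1/4"] Mmono[OF y] Mge(1)[of "\<kappa> * s^4"] by simp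
        moreover have "L (\<kappa> * (s\<^sup>2 + \<sigma>)\<^sup>2) powr (-q) \<le> L (\<kappa> * s^4) powr (-q)"
          using powr_neg_mono[of "L (\<kappa> * s^4)" "L (\<kappa> * (s\<^sup>2 + \<sigma>)\<^sup>2)" q] Lmono[OF y] Lge(3) q by simp
        ultimately show "g s \<le> M (\<kappa> * s^4) powr (-1/4) * L (\<kappa> * s^4) powr (-q)" unfolding g_def by (intro mult_mono) auto
      qed
      also have "\<dots> \<le> ennreal (CT q * \<kappa> powr (-1/4) * L \<kappa> powr (1-q))" by (rule TI[OF kap])
      finally show ?thesis by (simp add: B_def mult.assoc)
    qed
    have "(\<integral>\<^sup>+ s. ennreal (g s) * indicator {0..} s \<partial>lborel) \<le> ennreal (B + CT q * B)"
      by (rule order_trans[OF SPLIT[OF gm, of 0 1] ADD[OF p1 p2]]) (use Bp CTp in auto)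
    also have "B + CT q * B \<le> (1 + CT q + CN q + 4 * CT q * 2 powr (q-1)) * B"
      using Bp CNp CTp by (simp add: algebra_simps)
    finally show ?thesis by (simp add: ennreal_leI)
  next
    case False
    then have sm: "\<sigma> = -1" using sig by simp
    have p1: "(\<integral>\<^sup>+ s. ennreal (g s) * indicator {0..2} s \<partial>lborel) \<le> ennreal (CN q * B)"
    proof -
      define h where "h = (\<lambda>s::real. \<bar>s - 1\<bar> powr (-1/2) * L (\<kappa> * (s-1)^2) powr (-q))"
      have hm: "h \<in> borel_measurable borel" unfolding h_def M_def L_def by measurable
      have "(\<integral>\<^sup>+ s. ennreal (g s) * indicator {0..2} s \<partial>lborel) \<le> (\<integral>\<^sup>+ s. ennreal (\<kappa> powr (-1/4) * h s) * indicator {0..2} s \<partial>lborel)"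
      proof (rule nn_integral_mono_AE)
        show "AE s in lborel. ennreal (g s) * indicator {0..2} s \<le> ennreal (\<kappa> powr (-1/4) * h s) * indicator {0..2} s"
          using AE_lborel_singleton[of 1]
        proof (rule eventually_mono)
          fix s :: real assume s1: "s \<noteq> 1"
          show "ennreal (g s) * indicator {0..2} s \<le> ennreal (\<kappa> powr (-1/4) * h s) * indicator {0..2} s"
          proof (cases "s \<in> {0..2}")
            case True
            have fac: "(s\<^sup>2 + \<sigma>)\<^sup>2 = (s-1)^2 * (s+1)^2" using sm by (simp add: power2_eq_square algebra_simps)
            have "(s+1)^2 \<ge> 1" using True by (simp add: one_le_power)
            then have "(s-1)^2 * 1 \<le> (s\<^sup>2 + \<sigma>)\<^sup>2" unfolding fac by (intro mult_left_mono) auto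
            then have y: "\<kappa> * (s-1)^2 \<le> \<kappa> * (s\<^sup>2 + \<sigma>)\<^sup>2" using kap by simp
            have y0: "\<kappa> * (s-1)^2 > 0" using kap s1 by simp
            have "M (\<kappa> * (s\<^sup>2 + \<sigma>)\<^sup>2) powr (-1/4) \<le> (\<kappa> * (s-1)^2) powr (-1/4)"
              using powr_neg_mono[of "\<kappa> * (s-1)^2" "M (\<kappa> * (s\<^sup>2 + \<sigma>)\<^sup>2)" "1/4"] Mge(2)[of "\<kappa> * (s\<^sup>2 + \<sigma>)\<^sup>2"] y y0 by simp
            also have "\<dots> = \<kappa> powr (-1/4) * \<bar>s - 1\<bar> powr (-1/2)" using pow_quarter[of "s-1" \<kappa>] s1 kap by simp
            finally have m: "M (\<kappa> * (s\<^sup>2 + \<sigma>)\<^sup>2) powr (-1/4) \<le> \<kappa> powr (-1/4) * \<bar>s - 1\<bar> powr (-1/2)" .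
            have l: "L (\<kappa> * (s\<^sup>2 + \<sigma>)\<^sup>2) powr (-q) \<le> L (\<kappa> * (s-1)^2) powr (-q)"
              using powr_neg_mono[of "L (\<kappa> * (s-1)^2)" "L (\<kappa> * (s\<^sup>2 + \<sigma>)\<^sup>2)" q] Lmono[OF y] Lge(3) q by simp
            have "g s \<le> \<kappa> powr (-1/4) * h s" unfolding g_def h_def
              using mult_mono[OF m l] by (simp add: mult.assoc)
            then show ?thesis using True by (simp add: ennreal_leI)
          qed simp
        qed
      qed
      also have "\<dots> = ennreal (\<kappa> powr (-1/4)) * (\<integral>\<^sup>+ s. ennreal (h s) * indicator {0..2} s \<partial>lborel)"
        by (rule CMULT[OF hm]) auto
      also have "\<dots> \<le> ennreal (\<kappa> powr (-1/4)) * ennreal (CN q * L \<kappa> powr (1-q))"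
        by (rule mult_left_mono) (use NEAR[OF kap q] in \<open>auto simp: h_def CN_def\<close>)
      also have "\<dots> = ennreal (\<kappa> powr (-1/4) * (CN q * L \<kappa> powr (1-q)))" by (rule ennreal_mult'[symmetric]) simp
      also have "\<dots> = ennreal (CN q * B)" by (simp add: B_def ac_simps)
      finally show ?thesis .
    qed
    have p2: "(\<integral>\<^sup>+ s. ennreal (g s) * indicator {2 ..} s \<partial>lborel) \<le> ennreal (4 * CT q * 2 powr (q-1) * B)"
    proof -
      have "(\<integral>\<^sup>+ s. ennreal (g s) * indicator {2 ..} s \<partial>lborel) \<le> (\<integral>\<^sup>+ s. ennreal (M ((\<kappa>/4) * s^4) powr (-1/4) * L ((\<kappa>/4) * s^4) powr (-q)) * indicator {1 ..} s \<partial>lborel)"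
      proof (rule nn_integral_mono)
        fix s :: real
        show "ennreal (g s) * indicator {2 ..} s \<le> ennreal (M ((\<kappa>/4) * s^4) powr (-1/4) * L ((\<kappa>/4) * s^4) powr (-q)) * indicator {1 ..} s"
        proof (cases "s \<ge> 2")
          case True
          have "s^2 \<ge> 2^2" using True by (intro power_mono) auto
          then have "s^2/2 \<le> s\<^sup>2 + \<sigma>" using sm by simp
          moreover have "s^2/2 \<ge> 0" by simp
          ultimately have "(s^2/2)^2 \<le> (s\<^sup>2 + \<sigma>)\<^sup>2" by (intro power_mono) auto
          then have y: "(\<kappa>/4) * s^4 \<le> \<kappa> * (s\<^sup>2 + \<sigma>)\<^sup>2" using kap
            by (simp add: power_mult[symmetric] power_divide)
          have "M (\<kappa> * (s\<^sup>2 + \<sigma>)\<^sup>2) powr (-1/4) \<le> M ((\<kappa>/4) * s^4) powr (-1/4)"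
            using powr_neg_mono[of "M ((\<kappa>/4) * s^4)" "M (\<kappa> * (s\<^sup>2 + \<sigma>)\<^sup>2)" "1/4"] Mmono[OF y] Mge(1)[of "(\<kappa>/4) * s^4"] by simp
          moreover have "L (\<kappa> * (s\<^sup>2 + \<sigma>)\<^sup>2) powr (-q) \<le> L ((\<kappa>/4) * s^4) powr (-q)"
            using powr_neg_mono[of "L ((\<kappa>/4) * s^4)" "L (\<kappa> * (s\<^sup>2 + \<sigma>)\<^sup>2)" q] Lmono[OF y] Lge(3) q by simp
          ultimately have "g s \<le> M ((\<kappa>/4) * s^4) powr (-1/4) * L ((\<kappa>/4) * s^4) powr (-q)" unfolding g_def by (intro mult_mono) auto
          then show ?thesis using True by (simp add: ennreal_leI)
        qed simp
      qed
      also have "\<dots> \<le> ennreal (CT q * (\<kappa>/4) powr (-1/4) * L (\<kappa>/4) powr (1-q))" by (rule TI) (use kap in simp)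
      also have "CT q * (\<kappa>/4) powr (-1/4) * L (\<kappa>/4) powr (1-q) \<le> 4 * CT q * 2 powr (q-1) * B"
      proof -
        have a: "(\<kappa>/4) powr (-1/4) \<le> 4 * \<kappa> powr (-1/4)"
        proof -
          have "(\<kappa>/4) powr (-1/4) = 4 powr (1/4) * \<kappa> powr (-1/4)" using kap by (simp add: powr_divide powr_minus_divide)
          moreover have "4 powr (1/4) \<le> (4::real)" using powr_mono[of "1/4" 1 "4::real"] by simp
          ultimately show ?thesis by (simp add: mult_right_mono)
        qed
        have b: "L (\<kappa>/4) powr (1-q) \<le> 2 powr (q-1) * L \<kappa> powr (1-q)"
        proof -
          have "L (\<kappa>/4) powr (1-q) \<le> (L \<kappa> / 2) powr (1-q)"
            using powr_neg_mono[of "L \<kappa> / 2" "L (\<kappa>/4)" "q-1"] Lquarter[of \<kappa>] Lge(3)[of \<kappa>] q by simp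
          also have "(L \<kappa> / 2) powr (1-q) = 2 powr (q-1) * L \<kappa> powr (1-q)"
            using Lge(3)[of \<kappa>] by (simp add: powr_divide powr_minus_divide powr_diff)
          finally show ?thesis .
        qed
        have "CT q * (\<kappa>/4) powr (-1/4) * L (\<kappa>/4) powr (1-q) \<le> CT q * (4 * \<kappa> powr (-1/4)) * (2 powr (q-1) * L \<kappa> powr (1-q))"
          using a b CTp by (intro mult_mono) auto
        then show ?thesis by (simp add: B_def ac_simps)
      qed
      finally show ?thesis by (simp add: ennreal_leI)
    qed
    have "(\<integral>\<^sup>+ s. ennreal (g s) * indicator {0..} s \<partial>lborel) \<le> ennreal (CN q * B + 4 * CT q * 2 powr (q-1) * B)"
      by (rule order_trans[OF SPLIT[OF gm, of 0 2] ADD[OF p1 p2]]) (use Bp CTp CNp in auto)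
    also have "CN q * B + 4 * CT q * 2 powr (q-1) * B \<le> (1 + CT q + CN q + 4 * CT q * 2 powr (q-1)) * B"
      using Bp CNp CTp by (simp add: algebra_simps)
    finally show ?thesis by (simp add: ennreal_leI)
  qed
  then show ?thesis unfolding g_def B_def by (simp add: ac_simps)
qed

lemma G2:
  fixes \<kappa> q \<sigma> :: real
  assumes kap: "\<kappa> > 0" and q: "q > 1" and sig: "\<sigma> \<in> {1, -1}"
  shows "(\<integral>\<^sup>+ s. ennreal (\<bar>s\<^sup>2 + \<sigma>\<bar> powr (-1/2) * L (\<kappa> * (s\<^sup>2 + \<sigma>)\<^sup>2) powr (-q)) * indicator {0..} s \<partial>lborel)
     \<le> ennreal ((1 + CT q + CN q + 4 * CT q * 2 powr (q-1)) * L (1/\<kappa>) * L \<kappa> powr (1-q))"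
proof -
  define g where "g = (\<lambda>s. \<bar>s\<^sup>2 + \<sigma>\<bar> powr (-1/2) * L (\<kappa> * (s\<^sup>2 + \<sigma>)\<^sup>2) powr (-q))"
  have gm: "g \<in> borel_measurable borel" unfolding g_def M_def L_def by measurable
  define B where "B = L (1/\<kappa>) * L \<kappa> powr (1-q)"
  have Bp: "B \<ge> 0" by (simp add: B_def Lge(3) less_imp_le)
  have CTp: "CT q \<ge> 0" using q by (simp add: CT_def)
  have CNp: "CN q \<ge> 0" by (simp add: CN_def)
  have LqB: "L \<kappa> powr (1-q) \<le> B" unfolding B_def
    using mult_right_mono[OF Lge(4)[of "1/\<kappa>"], of "L \<kappa> powr (1-q)"] by simp
  have TII: "(\<integral>\<^sup>+ s. ennreal (1/s * L (\<kappa>' * s^4) powr (-q)) * indicator {1 ..} s \<partial>lborel)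
      \<le> ennreal (CT q * L (1/\<kappa>') * L \<kappa>' powr (1-q))" if "\<kappa>' > 0" for \<kappa>'
    using TAIL_II[OF that q] by (simp add: CT_def)
  have main: "(\<integral>\<^sup>+ s. ennreal (g s) * indicator {0..} s \<partial>lborel) \<le> ennreal ((1 + CT q + CN q + 4 * CT q * 2 powr (q-1)) * B)"
  proof (cases "\<sigma> = 1")
    case True
    have p1: "(\<integral>\<^sup>+ s. ennreal (g s) * indicator {0..1} s \<partial>lborel) \<le> ennreal B"
    proof -
      have "(\<integral>\<^sup>+ s. ennreal (g s) * indicator {0..1} s \<partial>lborel) \<le> ennreal (1 * L \<kappa> powr (-q) * (1 - 0))"
      proof (rule CONSTB)
        fix s :: real assume "s \<in> {0..1}"
        have u1: "\<bar>s\<^sup>2 + \<sigma>\<bar> \<ge> 1" using True by simp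
        have u: "(s\<^sup>2 + \<sigma>)\<^sup>2 \<ge> 1" using True by (simp add: one_le_power)
        then have y: "\<kappa> * (s\<^sup>2 + \<sigma>)\<^sup>2 \<ge> \<kappa>" using kap by (simp add: mult_le_cancel_left1)
        have "\<bar>s\<^sup>2 + \<sigma>\<bar> powr (-1/2) \<le> 1"
          using powr_neg_mono[of 1 "\<bar>s\<^sup>2 + \<sigma>\<bar>" "1/2"] u1 by simp
        moreover have "L (\<kappa> * (s\<^sup>2 + \<sigma>)\<^sup>2) powr (-q) \<le> L \<kappa> powr (-q)"
          using powr_neg_mono[of "L \<kappa>" "L (\<kappa> * (s\<^sup>2 + \<sigma>)\<^sup>2)" q] Lmono[OF y] Lge(3)[of \<kappa>] q by simp
        ultimately show "g s \<le> 1 * L \<kappa> powr (-q)" unfolding g_def by (intro mult_mono) auto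
      qed auto
      also have "1 * L \<kappa> powr (-q) * (1 - 0) \<le> B"
        using powr_mono[of "-q" "1-q" "L \<kappa>"] Lge(4)[of \<kappa>] LqB by simp
      finally show ?thesis by (simp add: ennreal_leI)
    qed
    have p2: "(\<integral>\<^sup>+ s. ennreal (g s) * indicator {1 ..} s \<partial>lborel) \<le> ennreal (CT q * B)"
    proof -
      have "(\<integral>\<^sup>+ s. ennreal (g s) * indicator {1 ..} s \<partial>lborel) \<le> (\<integral>\<^sup>+ s. ennreal (1/s * L (\<kappa> * s^4) powr (-q)) * indicator {1 ..} s \<partial>lborel)"
      proof (rule MONO)
        fix s :: real assume "s \<in> {1 ..}"
        then have s: "s \<ge> 1" by simp
        have su: "s^2 \<le> s\<^sup>2 + \<sigma>" using True by simp
        then have "(s^2)^2 \<le> (s\<^sup>2 + \<sigma>)\<^sup>2" by (intro power_mono) auto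
        then have y: "\<kappa> * s^4 \<le> \<kappa> * (s\<^sup>2 + \<sigma>)\<^sup>2" using kap by (simp add: power_mult[symmetric])
        have s2p: "1 * s^2 > 0" using s by simp
        have "\<bar>s\<^sup>2 + \<sigma>\<bar> powr (-1/2) \<le> (1 * s^2) powr (-1/2)"
          using powr_neg_mono[of "1 * s^2" "\<bar>s\<^sup>2 + \<sigma>\<bar>" "1/2"] su s2p by simp
        also have "\<dots> = 1/s" using pow_half[of s 1] s by simp
        finally have m: "\<bar>s\<^sup>2 + \<sigma>\<bar> powr (-1/2) \<le> 1/s" .
        have l: "L (\<kappa> * (s\<^sup>2 + \<sigma>)\<^sup>2) powr (-q) \<le> L (\<kappa> * s^4) powr (-q)"
          using powr_neg_mono[of "L (\<kappa> * s^4)" "L (\<kappa> * (s\<^sup>2 + \<sigma>)\<^sup>2)" q] Lmono[OF y] Lge(3) q by simp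
        show "g s \<le> 1/s * L (\<kappa> * s^4) powr (-q)" unfolding g_def by (rule mult_mono[OF m l]) (use s in auto)
      qed
      also have "\<dots> \<le> ennreal (CT q * L (1/\<kappa>) * L \<kappa> powr (1-q))" by (rule TII[OF kap])
      finally show ?thesis by (simp add: B_def mult.assoc)
    qed
    have "(\<integral>\<^sup>+ s. ennreal (g s) * indicator {0..} s \<partial>lborel) \<le> ennreal (B + CT q * B)"
      by (rule order_trans[OF SPLIT[OF gm, of 0 1] ADD[OF p1 p2]]) (use Bp CTp in auto)
    also have "B + CT q * B \<le> (1 + CT q + CN q + 4 * CT q * 2 powr (q-1)) * B"
      using Bp CNp CTp by (simp add: algebra_simps)
    finally show ?thesis by (simp add: ennreal_leI)
  next
    case False
    then have sm: "\<sigma> = -1" using sig by simp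
    have p1: "(\<integral>\<^sup>+ s. ennreal (g s) * indicator {0..2} s \<partial>lborel) \<le> ennreal (CN q * B)"
    proof -
      have "(\<integral>\<^sup>+ s. ennreal (g s) * indicator {0..2} s \<partial>lborel) \<le> (\<integral>\<^sup>+ s. ennreal (\<bar>s - 1\<bar> powr (-1/2) * L (\<kappa> * (s-1)^2) powr (-q)) * indicator {0..2} s \<partial>lborel)"
      proof (rule MONO)
        fix s :: real assume sI: "s \<in> {0..2}"
        show "g s \<le> \<bar>s - 1\<bar> powr (-1/2) * L (\<kappa> * (s-1)^2) powr (-q)"
        proof (cases "s = 1")
          case True then show ?thesis using sm by (simp add: g_def)
        next
          case s1: False
          have fac: "(s\<^sup>2 + \<sigma>)\<^sup>2 = (s-1)^2 * (s+1)^2" using sm by (simp add: power2_eq_square algebra_simps)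
          have "(s+1)^2 \<ge> 1" using sI by (simp add: one_le_power)
          then have "(s-1)^2 * 1 \<le> (s\<^sup>2 + \<sigma>)\<^sup>2" unfolding fac by (intro mult_left_mono) auto
          then have y: "\<kappa> * (s-1)^2 \<le> \<kappa> * (s\<^sup>2 + \<sigma>)\<^sup>2" using kap by simp
          have fa0: "s\<^sup>2 + \<sigma> = (s-1) * (s+1)" using sm by (simp add: power2_eq_square algebra_simps)
          have fa: "\<bar>s\<^sup>2 + \<sigma>\<bar> = \<bar>s - 1\<bar> * (s+1)" unfolding fa0 abs_mult using sI by simp
          have "\<bar>s - 1\<bar> * 1 \<le> \<bar>s - 1\<bar> * (s+1)" using sI by (intro mult_left_mono) auto
          then have ua: "\<bar>s - 1\<bar> \<le> \<bar>s\<^sup>2 + \<sigma>\<bar>" using fa by simp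
          have m: "\<bar>s\<^sup>2 + \<sigma>\<bar> powr (-1/2) \<le> \<bar>s - 1\<bar> powr (-1/2)"
            using powr_neg_mono[of "\<bar>s - 1\<bar>" "\<bar>s\<^sup>2 + \<sigma>\<bar>" "1/2"] ua s1 by simp
          have l: "L (\<kappa> * (s\<^sup>2 + \<sigma>)\<^sup>2) powr (-q) \<le> L (\<kappa> * (s-1)^2) powr (-q)"
            using powr_neg_mono[of "L (\<kappa> * (s-1)^2)" "L (\<kappa> * (s\<^sup>2 + \<sigma>)\<^sup>2)" q] Lmono[OF y] Lge(3) q by simp
          show ?thesis unfolding g_def by (rule mult_mono[OF m l]) auto
        qed
      qed
      also have "\<dots> \<le> ennreal (CN q * L \<kappa> powr (1-q))" using NEAR[OF kap q] by (simp add: CN_def)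
      also have "CN q * L \<kappa> powr (1-q) \<le> CN q * B" using LqB CNp by (intro mult_left_mono) auto
      finally show ?thesis by (simp add: ennreal_leI)
    qed
    have p2: "(\<integral>\<^sup>+ s. ennreal (g s) * indicator {2 ..} s \<partial>lborel) \<le> ennreal (4 * CT q * 2 powr (q-1) * B)"
    proof -
      define h where "h = (\<lambda>s::real. 1/s * L ((\<kappa>/4) * s^4) powr (-q))"
      have hm: "h \<in> borel_measurable borel" unfolding h_def M_def L_def by measurable
      have "(\<integral>\<^sup>+ s. ennreal (g s) * indicator {2 ..} s \<partial>lborel) \<le> (\<integral>\<^sup>+ s. ennreal (2 * h s) * indicator {1 ..} s \<partial>lborel)"
      proof (rule nn_integral_mono)
        fix s :: real
        show "ennreal (g s) * indicator {2 ..} s \<le> ennreal (2 * h s) * indicator {1 ..} s"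
        proof (cases "s \<ge> 2")
          case True
          have "s^2 \<ge> 2^2" using True by (intro power_mono) auto
          then have su: "s^2/2 \<le> s\<^sup>2 + \<sigma>" using sm by simp
          moreover have "s^2/2 \<ge> 0" by simp
          ultimately have "(s^2/2)^2 \<le> (s\<^sup>2 + \<sigma>)\<^sup>2" by (intro power_mono) auto
          then have y: "(\<kappa>/4) * s^4 \<le> \<kappa> * (s\<^sup>2 + \<sigma>)\<^sup>2" using kap
            by (simp add: power_mult[symmetric] power_divide)
          have sp: "s > 0" using True by simp
          have p: "(1/2) * s^2 > 0" using sp by simp
          have "\<bar>s\<^sup>2 + \<sigma>\<bar> powr (-1/2) \<le> ((1/2) * s^2) powr (-1/2)"
          proof -
            have "0 \<le> s\<^sup>2 + \<sigma>" using su zero_le_power2[of s] by linarith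
            then have ab: "\<bar>s\<^sup>2 + \<sigma>\<bar> = s\<^sup>2 + \<sigma>" by simp
            show ?thesis using powr_neg_mono[of "(1/2) * s^2" "\<bar>s\<^sup>2 + \<sigma>\<bar>" "1/2"] su p ab by simp
          qed
          also have "\<dots> = (1/2) powr (-1/2) * (1/s)" by (rule pow_half[OF sp]) simp
          also have "(1/2::real) powr (-1/2) \<le> 2"
          proof -
            have "(1/2::real) powr (-1/2) = 2 powr (1/2)" by (simp add: powr_divide powr_minus_divide)
            also have "\<dots> \<le> 2 powr 1" by (rule powr_mono) auto
            finally show ?thesis by simp
          qed
          then have "(1/2) powr (-1/2) * (1/s) \<le> 2 * (1/s)" using sp by (intro mult_right_mono) auto
          finally have m: "\<bar>s\<^sup>2 + \<sigma>\<bar> powr (-1/2) \<le> 2 * (1/s)" .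
          have l: "L (\<kappa> * (s\<^sup>2 + \<sigma>)\<^sup>2) powr (-q) \<le> L ((\<kappa>/4) * s^4) powr (-q)"
            using powr_neg_mono[of "L ((\<kappa>/4) * s^4)" "L (\<kappa> * (s\<^sup>2 + \<sigma>)\<^sup>2)" q] Lmono[OF y] Lge(3) q by simp
          have "g s \<le> 2 * (1/s) * L ((\<kappa>/4) * s^4) powr (-q)" unfolding g_def by (rule mult_mono[OF m l]) (use sp in auto)
          then show ?thesis using True by (simp add: ennreal_leI h_def mult.assoc)
        qed simp
      qed
      also have "\<dots> = ennreal 2 * (\<integral>\<^sup>+ s. ennreal (h s) * indicator {1 ..} s \<partial>lborel)"
        by (rule CMULT[OF hm]) auto
      also have "\<dots> \<le> ennreal 2 * ennreal (CT q * L (1/(\<kappa>/4)) * L (\<kappa>/4) powr (1-q))"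
        by (rule mult_left_mono) (use TII[of "\<kappa>/4"] kap in \<open>auto simp: h_def\<close>)
      also have "\<dots> = ennreal (2 * (CT q * L (1/(\<kappa>/4)) * L (\<kappa>/4) powr (1-q)))" by (rule ennreal_mult'[symmetric]) simp
      also have "2 * (CT q * L (1/(\<kappa>/4)) * L (\<kappa>/4) powr (1-q)) \<le> 4 * CT q * 2 powr (q-1) * B"
      proof -
        have a: "L (1/(\<kappa>/4)) \<le> 2 * L (1/\<kappa>)" using Lfour[of "1/\<kappa>"] by simp
        have b: "L (\<kappa>/4) powr (1-q) \<le> 2 powr (q-1) * L \<kappa> powr (1-q)"
        proof -
          have "L (\<kappa>/4) powr (1-q) \<le> (L \<kappa> / 2) powr (1-q)"
            using powr_neg_mono[of "L \<kappa> / 2" "L (\<kappa>/4)" "q-1"] Lquarter[of \<kappa>] Lge(3)[of \<kappa>] q by simp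
          also have "(L \<kappa> / 2) powr (1-q) = 2 powr (q-1) * L \<kappa> powr (1-q)"
            using Lge(3)[of \<kappa>] by (simp add: powr_divide powr_minus_divide powr_diff)
          finally show ?thesis .
        qed
        have "2 * (CT q * L (1/(\<kappa>/4)) * L (\<kappa>/4) powr (1-q)) \<le> 2 * (CT q * (2 * L (1/\<kappa>)) * (2 powr (q-1) * L \<kappa> powr (1-q)))"
          using a b CTp Lge(3)[of "1/(\<kappa>/4)"] by (intro mult_left_mono mult_mono) auto
        then show ?thesis by (simp add: B_def ac_simps)
      qed
      finally show ?thesis by (simp add: ennreal_leI)
    qed
    have "(\<integral>\<^sup>+ s. ennreal (g s) * indicator {0..} s \<partial>lborel) \<le> ennreal (CN q * B + 4 * CT q * 2 powr (q-1) * B)"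
      by (rule order_trans[OF SPLIT[OF gm, of 0 2] ADD[OF p1 p2]]) (use Bp CTp CNp in auto)
    also have "CN q * B + 4 * CT q * 2 powr (q-1) * B \<le> (1 + CT q + CN q + 4 * CT q * 2 powr (q-1)) * B"
      using Bp CNp CTp by (simp add: algebra_simps)
    finally show ?thesis by (simp add: ennreal_leI)
  qed
  then show ?thesis unfolding g_def B_def by (simp add: ac_simps)
qed
theorem lemma2p2:
  fixes r r1 r2 :: real
  assumes "r > 2" and "r1 \<ge> 2" and "r2 \<ge> 0" and "r = r1 + r2"
  shows "\<exists>c>0. \<forall>\<kappa>1 \<kappa>2 \<sigma>::real. \<kappa>1 > 0 \<longrightarrow> \<kappa>2 > 0 \<longrightarrow> \<sigma> \<in> {1, -1} \<longrightarrow>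
     (\<integral>\<^sup>+ s\<in>{0..}. ennreal (M (\<kappa>1 * (s\<^sup>2 + \<sigma>)\<^sup>2 + \<kappa>2) powr (-1/4)
                              * L (\<kappa>1 * (s\<^sup>2 + \<sigma>)\<^sup>2 + \<kappa>2) powr (-r)) \<partial>lborel)
        \<le> ennreal (c * \<kappa>1 powr (-1/4) * L \<kappa>1 powr (-r1 + 1) * L \<kappa>2 powr (-r2))
   \<and> (\<integral>\<^sup>+ s\<in>{0..}. ennreal (\<bar>s\<^sup>2 + \<sigma>\<bar> powr (-1/2)
                              * L (\<kappa>1 * (s\<^sup>2 + \<sigma>)\<^sup>2) powr (-r)) \<partial>lborel)
        \<le> ennreal (c * L (1 / \<kappa>1) * L \<kappa>1 powr (-r + 1))
   \<and> (\<integral>\<^sup>+ s\<in>{0..}. ennreal (M (\<kappa>1 * s\<^sup>2 + \<kappa>2) powr (-1/2)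
                              * L (\<kappa>1 * s\<^sup>2 + \<kappa>2) powr (-r)) \<partial>lborel)
        \<le> ennreal (c * \<kappa>1 powr (-1/2) * L \<kappa>2 powr (-r + 2))
   \<and> (\<integral>\<^sup>+ s\<in>{0..}. ennreal ((\<kappa>1 * s\<^sup>2 + \<kappa>2) powr (-1/2)
                              * L (\<kappa>1 * s\<^sup>2 + \<kappa>2) powr (-r)) \<partial>lborel)
        \<le> ennreal (c * \<kappa>1 powr (-1/2) * L (1 / \<kappa>2) * L \<kappa>2 powr (-r + 2))"
proof -
  define K1 where "K1 = 1 + CT r1 + CN r1 + 4 * CT r1 * 2 powr (r1-1)"
  define K2 where "K2 = 1 + CT r + CN r + 4 * CT r * 2 powr (r-1)"
  define K3 where "K3 = 1 + 1/(2*(r-1))"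
  define K4 where "K4 = 2 + 1/(2*(r-1))"
  have r1: "r1 > 1" and r0: "r > 1" using assms by auto
  have CT1: "CT r1 \<ge> 0" "CT r \<ge> 0" using r1 r0 by (auto simp: CT_def)
  have CN1: "CN r1 \<ge> 0" "CN r \<ge> 0" by (auto simp: CN_def)
  have K1p: "K1 \<ge> 1" using CT1 CN1 by (simp add: K1_def)
  have K2p: "K2 \<ge> 1" using CT1 CN1 by (simp add: K2_def)
  have K3p: "K3 \<ge> 1" using r0 by (simp add: K3_def)
  have K4p: "K4 \<ge> 1" using r0 by (simp add: K4_def)
  define c where "c = K1 + K2 + K3 + K4"
  have cK: "K1 \<le> c" "K2 \<le> c" "K3 \<le> c" "K4 \<le> c" using K1p K2p K3p K4p by (auto simp: c_def)
  show ?thesis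
  proof (intro exI[of _ c] conjI allI impI)
    show "c > 0" using K1p K2p K3p K4p by (simp add: c_def)
    fix \<kappa>1 \<kappa>2 \<sigma> :: real
    assume k1: "\<kappa>1 > 0" and k2: "\<kappa>2 > 0" and sig: "\<sigma> \<in> {1, -1}"
    show "(\<integral>\<^sup>+ s\<in>{0..}. ennreal (M (\<kappa>1 * (s\<^sup>2 + \<sigma>)\<^sup>2 + \<kappa>2) powr (-1/4)
                              * L (\<kappa>1 * (s\<^sup>2 + \<sigma>)\<^sup>2 + \<kappa>2) powr (-r)) \<partial>lborel)
        \<le> ennreal (c * \<kappa>1 powr (-1/4) * L \<kappa>1 powr (-r1 + 1) * L \<kappa>2 powr (-r2))"
    proof -
      define g where "g = (\<lambda>s. M (\<kappa>1 * (s\<^sup>2 + \<sigma>)\<^sup>2) powr (-1/4) * L (\<kappa>1 * (s\<^sup>2 + \<sigma>)\<^sup>2) powr (-r1))"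
      have gm: "g \<in> borel_measurable borel" unfolding g_def M_def L_def by measurable
      define L2 where "L2 = L \<kappa>2 powr (-r2)"
      have L2p: "L2 \<ge> 0" by (simp add: L2_def)
      have "(\<integral>\<^sup>+ s\<in>{0..}. ennreal (M (\<kappa>1 * (s\<^sup>2 + \<sigma>)\<^sup>2 + \<kappa>2) powr (-1/4)
                              * L (\<kappa>1 * (s\<^sup>2 + \<sigma>)\<^sup>2 + \<kappa>2) powr (-r)) \<partial>lborel)
          \<le> (\<integral>\<^sup>+ s. ennreal (L2 * g s) * indicator {0..} s \<partial>lborel)"
      proof (rule MONO)
        fix s :: real assume "s \<in> {0..}"
        define x where "x = \<kappa>1 * (s\<^sup>2 + \<sigma>)\<^sup>2 + \<kappa>2"
        define y where "y = \<kappa>1 * (s\<^sup>2 + \<sigma>)\<^sup>2"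
        have y0: "y \<ge> 0" using k1 by (simp add: y_def)
        have xy: "y \<le> x" "\<kappa>2 \<le> x" using k2 y0 by (auto simp: x_def y_def)
        have m: "M x powr (-1/4) \<le> M y powr (-1/4)"
          using powr_neg_mono[of "M y" "M x" "1/4"] Mmono[OF xy(1)] Mge(1)[of y] by simp
        have split: "L x powr (-r) = L x powr (-r1) * L x powr (-r2)"
          using assms(4) by (simp add: powr_add[symmetric])
        have la: "L x powr (-r1) \<le> L y powr (-r1)"
          using powr_neg_mono[of "L y" "L x" r1] Lmono[OF xy(1)] Lge(3) r1 by simp
        have lb: "L x powr (-r2) \<le> L2"
          using powr_neg_mono[of "L \<kappa>2" "L x" r2] Lmono[OF xy(2)] Lge(3) assms(3) by (simp add: L2_def)
        have "M x powr (-1/4) * L x powr (-r) = M x powr (-1/4) * L x powr (-r1) * L x powr (-r2)"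
          using split by simp
        also have "\<dots> \<le> M y powr (-1/4) * L y powr (-r1) * L2"
          using m la lb by (intro mult_mono) auto
        finally show "M (\<kappa>1 * (s\<^sup>2 + \<sigma>)\<^sup>2 + \<kappa>2) powr (-1/4) * L (\<kappa>1 * (s\<^sup>2 + \<sigma>)\<^sup>2 + \<kappa>2) powr (-r) \<le> L2 * g s"
          by (simp add: x_def y_def g_def ac_simps)
      qed
      also have "\<dots> = ennreal L2 * (\<integral>\<^sup>+ s. ennreal (g s) * indicator {0..} s \<partial>lborel)"
        by (rule CMULT[OF gm L2p]) simp
      also have "\<dots> \<le> ennreal L2 * ennreal (K1 * \<kappa>1 powr (-1/4) * L \<kappa>1 powr (1-r1))"
        by (rule mult_left_mono) (use G1[OF k1 r1 sig] in \<open>auto simp: g_def K1_def\<close>)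
      also have "\<dots> = ennreal (L2 * (K1 * \<kappa>1 powr (-1/4) * L \<kappa>1 powr (1-r1)))" by (rule ennreal_mult'[symmetric]) (rule L2p)
      also have "L2 * (K1 * \<kappa>1 powr (-1/4) * L \<kappa>1 powr (1-r1)) \<le> c * \<kappa>1 powr (-1/4) * L \<kappa>1 powr (-r1 + 1) * L \<kappa>2 powr (-r2)"
      proof -
        have "L2 * (K1 * \<kappa>1 powr (-1/4) * L \<kappa>1 powr (1-r1)) = K1 * (\<kappa>1 powr (-1/4) * L \<kappa>1 powr (-r1 + 1) * L \<kappa>2 powr (-r2))"
          by (simp add: L2_def ac_simps)
        also have "\<dots> \<le> c * (\<kappa>1 powr (-1/4) * L \<kappa>1 powr (-r1 + 1) * L \<kappa>2 powr (-r2))"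
          by (rule mult_right_mono[OF cK(1)]) simp
        finally show ?thesis by (simp add: ac_simps)
      qed
      finally show ?thesis by (simp add: ennreal_leI)
    qed
    show "(\<integral>\<^sup>+ s\<in>{0..}. ennreal (\<bar>s\<^sup>2 + \<sigma>\<bar> powr (-1/2)
                              * L (\<kappa>1 * (s\<^sup>2 + \<sigma>)\<^sup>2) powr (-r)) \<partial>lborel)
        \<le> ennreal (c * L (1 / \<kappa>1) * L \<kappa>1 powr (-r + 1))"
    proof -
      have "(\<integral>\<^sup>+ s\<in>{0..}. ennreal (\<bar>s\<^sup>2 + \<sigma>\<bar> powr (-1/2)
                              * L (\<kappa>1 * (s\<^sup>2 + \<sigma>)\<^sup>2) powr (-r)) \<partial>lborel) \<le> ennreal (K2 * L (1/\<kappa>1) * L \<kappa>1 powr (1-r))"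
        using G2[OF k1 r0 sig] by (simp add: K2_def)
      also have "K2 * L (1/\<kappa>1) * L \<kappa>1 powr (1-r) \<le> c * L (1 / \<kappa>1) * L \<kappa>1 powr (-r + 1)"
      proof -
        have "K2 * (L (1/\<kappa>1) * L \<kappa>1 powr (1-r)) \<le> c * (L (1/\<kappa>1) * L \<kappa>1 powr (1-r))"
          by (rule mult_right_mono[OF cK(2)]) (simp add: Lge(3) less_imp_le)
        then show ?thesis by (simp add: ac_simps)
      qed
      finally show ?thesis by (simp add: ennreal_leI)
    qed
    show "(\<integral>\<^sup>+ s\<in>{0..}. ennreal (M (\<kappa>1 * s\<^sup>2 + \<kappa>2) powr (-1/2)
                              * L (\<kappa>1 * s\<^sup>2 + \<kappa>2) powr (-r)) \<partial>lborel)
        \<le> ennreal (c * \<kappa>1 powr (-1/2) * L \<kappa>2 powr (-r + 2))"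
    proof -
      have "(\<integral>\<^sup>+ s\<in>{0..}. ennreal (M (\<kappa>1 * s\<^sup>2 + \<kappa>2) powr (-1/2)
                              * L (\<kappa>1 * s\<^sup>2 + \<kappa>2) powr (-r)) \<partial>lborel) \<le> ennreal (K3 * \<kappa>1 powr (-1/2) * L \<kappa>2 powr (1-r))"
        using P3[OF k1 k2 r0] by (simp add: K3_def)
      also have "K3 * \<kappa>1 powr (-1/2) * L \<kappa>2 powr (1-r) \<le> c * \<kappa>1 powr (-1/2) * L \<kappa>2 powr (-r + 2)"
      proof -
        have "L \<kappa>2 powr (1-r) \<le> L \<kappa>2 powr (-r + 2)" using Lge(4)[of \<kappa>2] by (intro powr_mono) auto
        then have "K3 * (\<kappa>1 powr (-1/2) * L \<kappa>2 powr (1-r)) \<le> c * (\<kappa>1 powr (-1/2) * L \<kappa>2 powr (-r + 2))"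
          using cK(3) K3p by (intro mult_mono mult_left_mono) auto
        then show ?thesis by (simp add: ac_simps)
      qed
      finally show ?thesis by (simp add: ennreal_leI)
    qed
    show "(\<integral>\<^sup>+ s\<in>{0..}. ennreal ((\<kappa>1 * s\<^sup>2 + \<kappa>2) powr (-1/2)
                              * L (\<kappa>1 * s\<^sup>2 + \<kappa>2) powr (-r)) \<partial>lborel)
        \<le> ennreal (c * \<kappa>1 powr (-1/2) * L (1 / \<kappa>2) * L \<kappa>2 powr (-r + 2))"
    proof -
      have "(\<integral>\<^sup>+ s\<in>{0..}. ennreal ((\<kappa>1 * s\<^sup>2 + \<kappa>2) powr (-1/2)
                              * L (\<kappa>1 * s\<^sup>2 + \<kappa>2) powr (-r)) \<partial>lborel) \<le> ennreal (K4 * \<kappa>1 powr (-1/2) * L (1/\<kappa>2) * L \<kappa>2 powr (1-r))"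
        using P4[OF k1 k2 r0] by (simp add: K4_def)
      also have "K4 * \<kappa>1 powr (-1/2) * L (1/\<kappa>2) * L \<kappa>2 powr (1-r) \<le> c * \<kappa>1 powr (-1/2) * L (1 / \<kappa>2) * L \<kappa>2 powr (-r + 2)"
      proof -
        have "L \<kappa>2 powr (1-r) \<le> L \<kappa>2 powr (-r + 2)" using Lge(4)[of \<kappa>2] by (intro powr_mono) auto
        then have "K4 * (\<kappa>1 powr (-1/2) * L (1/\<kappa>2) * L \<kappa>2 powr (1-r)) \<le> c * (\<kappa>1 powr (-1/2) * L (1/\<kappa>2) * L \<kappa>2 powr (-r + 2))"
          using cK(4) K4p Lge(3)[of "1/\<kappa>2"] by (intro mult_mono mult_left_mono) auto
        then show ?thesis by (simp add: ac_simps)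
      qed
      finally show ?thesis by (simp add: ennreal_leI)
    qed
  qed
qed

end
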